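(* Let $\mathcal{G}=(\mathcal{V},\mathcal{E})$ be a finite graph and let $x=(x_v)_{v\in\mathcal{V}}\in[0,1]^{\mathcal{V}}$. Then the following are equivalent: (1) $f\big((x_v/(1-x_v))_{v\in\mathcal{V}}\big)<\infty$ (in particular each $x_v<1$); (2) $\tilde f(x)<\infty$; (3) $\mathfrak{K}_{\mathcal{G}}(y)>0$ for each $y\in\prod_{v\in\mathcal{V}}\{0,x_v\}$; (4) $\mathfrak{K}_{\mathcal{G}}(y)>0$ for each $y\in\prod_{v\in\mathcal{V}}[0,x_v]$; (5) $\mathfrak{K}_{\mathcal{G}}(\alpha x)>0$ for all $\alpha\in[0,1]$.
   Context: Graphs are finite, simple, undirected; $v\sim v'$ denotes adjacency; a clique is a set of pairwise adjacent vertices (the empty set is a clique). $\mathfrak{K}_{\mathcal{G}}(x)=\sum_{\mathcal{K}\subseteq\mathcal{V}\text{ clique}}(-1)^{|\mathcal{K}|}\prod_{v\in\mathcal{K}}x_v$, the empty clique contributing $1$. A word is a finite string $w=w_1\cdots w_\ell$ of vertices (the empty word allowed). It is $\mathcal{G}$-reduced if whenever $i<j$ and $w_i=w_j$ there is $k$ with $i<k<j$, $w_k\ne w_i$, $w_k\not\sim w_i$. Two words are equivalent if one is obtained from the other by finitely many swaps of consecutive letters $w_iw_{i+1}$ with $w_i\sim w_{i+1}$. Let $\mathcal{W}_\ell$ be a set of representatives of equivalence classes of $\mathcal{G}$-reduced words of length $\ell$ and $\overline{\mathcal{W}}$ a set of representatives of equivalence classes of all words. Define the power series $f(X)=\sum_{\ell\ge0}\sum_{w\in\mathcal{W}_\ell}X_{w_1}\cdots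 X_{w_\ell}$ and $\tilde f(X)=\sum_{w\in\overline{\mathcal{W}}}X_{w_1}\cdots X_{w_\ell}$; for nonnegative real arguments these are evaluated in $[0,\infty]$ (and in (1) the value is $+\infty$ if some $x_v=1$). *)

theory Defs
  imports "HOL-Analysis.Analysis" "HOL-Library.Extended_Nonnegative_Real"
begin

definition simple_graph :: "'v set \<Rightarrow> ('v \<Rightarrow> 'v \<Rightarrow> bool) \<Rightarrow> bool" where
  "simple_graph V E \<longleftrightarrow> finite V \<and> (\<forall>a b. E a b \<longrightarrow> E b a) \<and> (\<forall>a. \<not> E a a)
     \<and> (\<forall>a b. E a b \<longrightarrow> a \<in> V \<and> b \<in> V)"

definition is_clique :: "('v \<Rightarrow> 'v \<Rightarrow> bool) \<Rightarrow> 'v set \<Rightarrow> bool" where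
  "is_clique E K \<longleftrightarrow> (\<forall>a\<in>K. \<forall>b\<in>K. a \<noteq> b \<longrightarrow> E a b)"

definition clique_poly :: "'v set \<Rightarrow> ('v \<Rightarrow> 'v \<Rightarrow> bool) \<Rightarrow> ('v \<Rightarrow> real) \<Rightarrow> real" where
  "clique_poly V E x = (\<Sum>K\<in>{K. K \<subseteq> V \<and> is_clique E K}. (-1) ^ card K * (\<Prod>v\<in>K. x v))"

definition words :: "'v set \<Rightarrow> 'v list set" where
  "words V = {w. set w \<subseteq> V}"

definition reduced_word :: "('v \<Rightarrow> 'v \<Rightarrow> bool) \<Rightarrow> 'v list \<Rightarrow> bool" where
  "reduced_word E w \<longleftrightarrow> (\<forall>i j. i < j \<and> j < length w \<and> w ! i = w ! j \<longrightarrow>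
      (\<exists>k. i < k \<and> k < j \<and> w ! k \<noteq> w ! i \<and> \<not> E (w ! k) (w ! i)))"

definition swap_step :: "('v \<Rightarrow> 'v \<Rightarrow> bool) \<Rightarrow> 'v list \<Rightarrow> 'v list \<Rightarrow> bool" where
  "swap_step E w w' \<longleftrightarrow> (\<exists>u a b v. w = u @ [a, b] @ v \<and> w' = u @ [b, a] @ v \<and> E a b)"

definition word_equiv :: "('v \<Rightarrow> 'v \<Rightarrow> bool) \<Rightarrow> ('v list \<times> 'v list) set" where
  "word_equiv E = {(w, w'). (\<lambda>p q. swap_step E p q \<or> swap_step E q p)\<^sup>*\<^sup>* w w'}"

definition monomial :: "('v \<Rightarrow> ennreal) \<Rightarrow> 'v list \<Rightarrow> ennreal" where
  "monomial X w = prod_list (map X w)"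

text \<open>f(X): sum over equivalence classes of G-reduced words, one representative each
  (the monomial does not depend on the representative).\<close>
definition f_series :: "'v set \<Rightarrow> ('v \<Rightarrow> 'v \<Rightarrow> bool) \<Rightarrow> ('v \<Rightarrow> ennreal) \<Rightarrow> ennreal" where
  "f_series V E X = (\<Sum>\<^sub>\<infinity> C \<in> {w \<in> words V. reduced_word E w} // word_equiv E.
       monomial X (SOME w. w \<in> C \<and> reduced_word E w))"

definition ftilde_series :: "'v set \<Rightarrow> ('v \<Rightarrow> 'v \<Rightarrow> bool) \<Rightarrow> ('v \<Rightarrow> ennreal) \<Rightarrow> ennreal" where
  "ftilde_series V E X = (\<Sum>\<^sub>\<infinity> C \<in> words V // word_equiv E. monomial X (SOME w. w \<in> C))"

end

theory Submission
  imports Defs "HOL-Computational_Algebra.Formal_Power_Series"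
begin

unbundle no vec_syntax
unbundle fps_syntax


locale sg =
  fixes E :: "'v \<Rightarrow> 'v \<Rightarrow> bool"
  assumes symE: "E a b \<Longrightarrow> E b a" and irrE: "\<not> E a a"
begin

definition eqv :: "'v list \<Rightarrow> 'v list \<Rightarrow> bool" where
  "eqv w w' \<longleftrightarrow> (w, w') \<in> word_equiv E"

definition sc :: "'v list \<Rightarrow> 'v list \<Rightarrow> bool" where
  "sc p q \<longleftrightarrow> swap_step E p q \<or> swap_step E q p"

lemma eqv_rt: "eqv w w' \<longleftrightarrow> sc\<^sup>*\<^sup>* w w'"
  unfolding eqv_def word_equiv_def sc_def by simp

lemma swap_sym: "swap_step E w w' \<Longrightarrow> swap_step E w' w"
  unfolding swap_step_def using symE by blast

lemma sc_swap: "sc p q \<longleftrightarrow> swap_step E p q"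
  unfolding sc_def using swap_sym by blast

lemma eqv_refl[simp]: "eqv w w"
  by (simp add: eqv_rt)

lemma eqv_sym: "eqv w w' \<Longrightarrow> eqv w' w"
proof -
  have "sc\<^sup>*\<^sup>* w w' \<Longrightarrow> sc\<^sup>*\<^sup>* w' w"
    by (induction rule: rtranclp_induct) (auto simp: sc_swap intro: converse_rtranclp_into_rtranclp swap_sym)
  thus "eqv w w' \<Longrightarrow> eqv w' w" by (simp add: eqv_rt)
qed

lemma eqv_trans: "eqv u v \<Longrightarrow> eqv v w \<Longrightarrow> eqv u w"
  unfolding eqv_rt by (rule rtranclp_trans)

lemma eqv_step: "swap_step E w w' \<Longrightarrow> eqv w w'"
  unfolding eqv_rt sc_swap by auto

lemma eqv_swap2: "E a b \<Longrightarrow> eqv (u @ [a, b] @ v) (u @ [b, a] @ v)"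
  by (rule eqv_step) (auto simp: swap_step_def)

lemma swap_wrap: "swap_step E w w' \<Longrightarrow> swap_step E (p @ w @ s) (p @ w' @ s)"
  unfolding swap_step_def by (metis append.assoc)

lemma eqv_wrap: "eqv w w' \<Longrightarrow> eqv (p @ w @ s) (p @ w' @ s)"
proof -
  have "sc\<^sup>*\<^sup>* w w' \<Longrightarrow> sc\<^sup>*\<^sup>* (p @ w @ s) (p @ w' @ s)"
  proof (induction rule: rtranclp_induct)
    case base then show ?case by simp
  next
    case (step y z)
    then show ?case by (metis rtranclp.rtrancl_into_rtrancl sc_swap swap_wrap)
  qed
  thus "eqv w w' \<Longrightarrow> eqv (p @ w @ s) (p @ w' @ s)" by (simp add: eqv_rt)
qed

lemma eqv_app: "eqv u u' \<Longrightarrow> eqv v v' \<Longrightarrow> eqv (u @ v) (u' @ v')"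
  by (metis append.right_neutral append_Nil eqv_trans eqv_wrap)

lemma eqv_Cons: "eqv u u' \<Longrightarrow> eqv (a # u) (a # u')"
  using eqv_app[of "[a]" "[a]" u u'] by simp

lemma swap_mset: "swap_step E w w' \<Longrightarrow> mset w = mset w'"
  unfolding swap_step_def by auto

lemma eqv_mset: "eqv w w' \<Longrightarrow> mset w = mset w'"
proof -
  have "sc\<^sup>*\<^sup>* w w' \<Longrightarrow> mset w = mset w'"
    by (induction rule: rtranclp_induct) (auto simp: sc_swap dest: swap_mset)
  thus "eqv w w' \<Longrightarrow> mset w = mset w'" by (simp add: eqv_rt)
qed

lemma eqv_length: "eqv w w' \<Longrightarrow> length w = length w'"
  by (metis eqv_mset size_mset)

lemma eqv_set: "eqv w w' \<Longrightarrow> set w = set w'"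
  by (metis eqv_mset set_mset_mset)

lemma prod_list_mset: "prod_list (map (y::'v \<Rightarrow> 'a::comm_monoid_mult) w) = prod_mset (image_mset y (mset w))"
  by (induction w) auto

lemma eqv_prod: "eqv w w' \<Longrightarrow> prod_list (map (y::'v \<Rightarrow> 'a::comm_monoid_mult) w) = prod_list (map y w')"
  by (simp add: prod_list_mset eqv_mset)

lemma swap_remove1: "swap_step E w w' \<Longrightarrow> eqv (remove1 a w) (remove1 a w')"
proof -
  assume "swap_step E w w'"
  then obtain u b c v where w: "w = u @ [b, c] @ v" and w': "w' = u @ [c, b] @ v" and bc: "E b c"
    unfolding swap_step_def by blast
  have bnc: "b \<noteq> c" using bc irrE by blast
  show ?thesis
  proof (cases "a \<in> set u")
    case True
    then show ?thesis using w w' bc eqv_swap2[of b c "remove1 a u" v] by (simp add: remove1_append)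
  next
    case False
    then show ?thesis using w w' bc bnc eqv_swap2[of b c u "remove1 a v"]
      by (cases "a = b"; cases "a = c") (auto simp: remove1_append)
  qed
qed

lemma eqv_remove1: "eqv w w' \<Longrightarrow> eqv (remove1 a w) (remove1 a w')"
proof -
  have "sc\<^sup>*\<^sup>* w w' \<Longrightarrow> eqv (remove1 a w) (remove1 a w')"
    by (induction rule: rtranclp_induct) (auto simp: sc_swap dest: swap_remove1 intro: eqv_trans)
  thus "eqv w w' \<Longrightarrow> eqv (remove1 a w) (remove1 a w')" by (simp add: eqv_rt)
qed

lemma eqv_cancel1: "eqv (a # s) (a # s') \<Longrightarrow> eqv s s'"
  using eqv_remove1[of "a # s" "a # s'" a] by simp

lemma eqv_cancel: "eqv (k @ s) (k @ s') \<Longrightarrow> eqv s s'"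
  by (induction k) (auto dest: eqv_cancel1)

definition mv :: "'v \<Rightarrow> 'v list \<Rightarrow> bool" where
  "mv a w \<longleftrightarrow> a \<in> set w \<and> (\<forall>b\<in>set (takeWhile (\<lambda>c. c \<noteq> a) w). E b a)"

lemma mv_Cons_self[simp]: "mv a (a # s)"
  by (simp add: mv_def)

lemma mv_Cons: "b \<noteq> a \<Longrightarrow> mv a (b # s) \<longleftrightarrow> E b a \<and> mv a s"
  by (auto simp: mv_def)

lemma mv_app: "a \<notin> set p \<Longrightarrow> mv a (p @ s) \<longleftrightarrow> (\<forall>b\<in>set p. E b a) \<and> mv a s"
  by (induction p) (auto simp: mv_Cons)

lemma swap_mv: "swap_step E w w' \<Longrightarrow> mv a w \<Longrightarrow> mv a w'"
proof -
  assume "swap_step E w w'" and m: "mv a w"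
  then obtain u b c v where w: "w = u @ [b, c] @ v" and w': "w' = u @ [c, b] @ v" and bc: "E b c"
    unfolding swap_step_def by blast
  have bnc: "b \<noteq> c" using bc irrE by blast
  show ?thesis
  proof (cases "a \<in> set u")
    case True
    then obtain u1 u2 where u: "u = u1 @ a # u2" "a \<notin> set u1" by (meson split_list_first)
    then show ?thesis using m w w' by (simp add: mv_app)
  next
    case False
    then show ?thesis using m w w' bc bnc symE
      by (cases "a = b"; cases "a = c") (auto simp: mv_app mv_Cons)
  qed
qed

lemma eqv_mv: "eqv w w' \<Longrightarrow> mv a w \<Longrightarrow> mv a w'"
proof -
  have "sc\<^sup>*\<^sup>* w w' \<Longrightarrow> mv a w \<Longrightarrow> mv a w'"
    by (induction rule: rtranclp_induct) (auto simp: sc_swap dest: swap_mv)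
  thus "eqv w w' \<Longrightarrow> mv a w \<Longrightarrow> mv a w'" by (simp add: eqv_rt)
qed

lemma mv_eqv: "mv a w \<Longrightarrow> eqv w (a # remove1 a w)"
proof (induction w)
  case Nil then show ?case by (simp add: mv_def)
next
  case (Cons b w)
  show ?case
  proof (cases "b = a")
    case True then show ?thesis by simp
  next
    case False
    with Cons.prems have ba: "E b a" and m: "mv a w" by (auto simp: mv_Cons)
    have "eqv (b # w) (b # a # remove1 a w)" using Cons.IH[OF m] by (rule eqv_Cons)
    moreover have "eqv (b # a # remove1 a w) (a # b # remove1 a w)"
      using eqv_swap2[of b a "[]" "remove1 a w"] ba by simp
    ultimately show ?thesis using False by (auto intro: eqv_trans)
  qed
qed

lemma mv_iff: "mv a w \<longleftrightarrow> (\<exists>s. eqv w (a # s))"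
  using mv_eqv eqv_mv eqv_sym mv_Cons_self by blast

lemma mv_clique: "mv a w \<Longrightarrow> mv b w \<Longrightarrow> a \<noteq> b \<Longrightarrow> E a b"
proof -
  assume "mv a w" "mv b w" "a \<noteq> b"
  then obtain s where "eqv w (a # s)" using mv_iff by blast
  with \<open>mv b w\<close> have "mv b (a # s)" using eqv_mv by blast
  with \<open>a \<noteq> b\<close> show "E a b" by (simp add: mv_Cons)
qed

lemma comm1: "(\<forall>b\<in>set p. E b a) \<Longrightarrow> eqv (p @ [a]) (a # p)"
proof (induction p)
  case Nil then show ?case by simp
next
  case (Cons b p)
  have "eqv (b # p @ [a]) (b # a # p)" using Cons by (auto intro: eqv_Cons)
  moreover have "eqv (b # a # p) (a # b # p)"
    using eqv_swap2[of b a "[]" p] Cons.prems by simp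
  ultimately show ?case by (auto intro: eqv_trans)
qed

lemma commk: "(\<forall>b\<in>set p. E b a) \<Longrightarrow> eqv (p @ replicate k a) (replicate k a @ p)"
proof (induction k)
  case 0 then show ?case by simp
next
  case (Suc k)
  have "p @ replicate (Suc k) a = (p @ [a]) @ replicate k a" by (simp add: replicate_app_Cons_same)
  moreover have "eqv ((p @ [a]) @ replicate k a) ((a # p) @ replicate k a)"
    using eqv_app[OF comm1[OF Suc.prems] eqv_refl] .
  moreover have "eqv ((a # p) @ replicate k a) (a # (replicate k a @ p))"
    using eqv_Cons[OF Suc.IH[OF Suc.prems]] by simp
  ultimately show ?case by (auto intro: eqv_trans)
qed

end


context sg begin

definition cls :: "'v list \<Rightarrow> 'v list set" where
  "cls w = word_equiv E `` {w}"

lemma mem_cls[simp]: "w' \<in> cls w \<longleftrightarrow> eqv w w'"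
  by (simp add: cls_def eqv_def)

lemma cls_eq_iff: "cls w = cls w' \<longleftrightarrow> eqv w w'"
proof
  assume "cls w = cls w'"
  then have "w' \<in> cls w" using eqv_refl mem_cls by blast
  then show "eqv w w'" by simp
next
  assume e: "eqv w w'"
  show "cls w = cls w'"
  proof (rule set_eqI)
    fix u show "u \<in> cls w \<longleftrightarrow> u \<in> cls w'"
      using e eqv_sym eqv_trans mem_cls by metis
  qed
qed

definition Q :: "'v set \<Rightarrow> 'v list set set" where
  "Q W = words W // word_equiv E"

lemma Q_iff: "C \<in> Q W \<longleftrightarrow> (\<exists>w. set w \<subseteq> W \<and> C = cls w)"
  unfolding Q_def quotient_def words_def cls_def by blast

definition rep :: "'v list set \<Rightarrow> 'v list" where
  "rep C = (SOME w. w \<in> C)"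

lemma rep_cls: "eqv w (rep (cls w))"
  unfolding rep_def by (metis eqv_refl mem_cls someI_ex)

lemma cls_rep: "cls (rep (cls w)) = cls w"
  by (metis cls_eq_iff eqv_sym rep_cls)

lemma Q_rep: "C \<in> Q W \<Longrightarrow> cls (rep C) = C \<and> set (rep C) \<subseteq> W"
  by (metis Q_iff cls_rep eqv_set rep_cls)

definition mono :: "('v \<Rightarrow> real) \<Rightarrow> 'v list set \<Rightarrow> real" where
  "mono y C = prod_list (map y (rep C))"

definition len :: "'v list set \<Rightarrow> nat" where
  "len C = length (rep C)"

lemma mono_cls[simp]: "mono y (cls w) = prod_list (map y w)"
  unfolding mono_def by (metis eqv_prod eqv_sym rep_cls)

lemma len_cls[simp]: "len (cls w) = length w"
  unfolding len_def by (metis eqv_length eqv_sym rep_cls)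

definition Qn :: "'v set \<Rightarrow> nat \<Rightarrow> 'v list set set" where
  "Qn W n = {C \<in> Q W. len C = n}"

lemma Qn_iff: "C \<in> Qn W n \<longleftrightarrow> (\<exists>w. set w \<subseteq> W \<and> length w = n \<and> C = cls w)"
  unfolding Qn_def Q_iff by auto

lemma finite_Qn: "finite W \<Longrightarrow> finite (Qn W n)"
proof -
  assume "finite W"
  have "Qn W n \<subseteq> cls ` {w. set w \<subseteq> W \<and> length w = n}"
    by (auto simp: Qn_iff)
  moreover have "finite {w. set w \<subseteq> W \<and> length w = n}"
    using finite_lists_length_eq[OF \<open>finite W\<close>] by simp
  ultimately show ?thesis by (rule finite_surj[rotated])
qed

definition A :: "'v set \<Rightarrow> ('v \<Rightarrow> real) \<Rightarrow> nat \<Rightarrow> real" where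
  "A W y n = (\<Sum>C\<in>Qn W n. mono y C)"

definition MinC :: "'v list set \<Rightarrow> 'v set" where
  "MinC C = {a. \<exists>s. a # s \<in> C}"

lemma MinC_cls: "MinC (cls w) = {a. mv a w}"
  unfolding MinC_def using mv_iff by auto

lemma MinC_sub: "MinC (cls w) \<subseteq> set w"
  by (auto simp: MinC_cls mv_def)

lemma MinC_clique: "is_clique E (MinC (cls w))"
  unfolding is_clique_def MinC_cls using mv_clique by blast

definition cl :: "'v set \<Rightarrow> 'v set set" where
  "cl W = {K. K \<subseteq> W \<and> is_clique E K}"

definition lst :: "'v set \<Rightarrow> 'v list" where
  "lst K = (SOME k. distinct k \<and> set k = K)"

lemma lst: "finite K \<Longrightarrow> distinct (lst K) \<and> set (lst K) = K"
  unfolding lst_def by (metis (mono_tags, lifting) finite_distinct_list someI_ex)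

lemma mv_list: "distinct k \<Longrightarrow> set k \<subseteq> {a. mv a w} \<Longrightarrow> \<exists>s. eqv w (k @ s)"
proof (induction k arbitrary: w)
  case Nil show ?case by (rule exI[of _ w]) simp
next
  case (Cons a k)
  have e: "eqv w (a # remove1 a w)" using Cons.prems by (intro mv_eqv) auto
  have "set k \<subseteq> {b. mv b (remove1 a w)}"
  proof
    fix b assume "b \<in> set k"
    then have "b \<noteq> a" "mv b w" using Cons.prems by auto
    then have "mv b (a # remove1 a w)" using e eqv_mv by blast
    then show "b \<in> {b. mv b (remove1 a w)}" using \<open>b \<noteq> a\<close> by (simp add: mv_Cons)
  qed
  then obtain s where "eqv (remove1 a w) (k @ s)" using Cons.IH[of "remove1 a w"] Cons.prems by auto
  then have "eqv w (a # k @ s)" using e eqv_Cons eqv_trans by blast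
  then show ?case by auto
qed

lemma clique_sub: "is_clique E K \<Longrightarrow> K' \<subseteq> K \<Longrightarrow> is_clique E K'"
  unfolding is_clique_def by blast

lemma clique_mv: "is_clique E (set k) \<Longrightarrow> distinct k \<Longrightarrow> a \<in> set k \<Longrightarrow> mv a (k @ s)"
proof -
  assume c: "is_clique E (set k)" and d: "distinct k" and a: "a \<in> set k"
  obtain p q where k: "k = p @ a # q" "a \<notin> set p" by (meson a split_list_first)
  have "\<forall>b\<in>set p. E b a" using c k unfolding is_clique_def by auto
  then show ?thesis using k by (simp add: mv_app)
qed

lemma div_iff:
  assumes "finite K" "is_clique E K"
  shows "(\<exists>s. eqv w (lst K @ s)) \<longleftrightarrow> K \<subseteq> MinC (cls w)"
proof
  assume "\<exists>s. eqv w (lst K @ s)"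
  then obtain s where e: "eqv w (lst K @ s)" by blast
  show "K \<subseteq> MinC (cls w)"
  proof
    fix a assume "a \<in> K"
    then have "mv a (lst K @ s)" using lst[OF assms(1)] assms(2) clique_mv by metis
    then show "a \<in> MinC (cls w)" by (auto simp: MinC_cls intro: eqv_mv[OF eqv_sym[OF e]])
  qed
next
  assume "K \<subseteq> MinC (cls w)"
  then show "\<exists>s. eqv w (lst K @ s)" using mv_list lst[OF assms(1)] by (simp add: MinC_cls)
qed

lemma alt_sum: "finite S \<Longrightarrow> (\<Sum>K\<in>Pow S. (-1::real) ^ card K) = (if S = {} then 1 else 0)"
proof (induction rule: finite_induct)
  case empty then show ?case by simp
next
  case (insert a S)
  have P: "Pow (insert a S) = Pow S \<union> insert a ` Pow S" by (rule Pow_insert)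
  have d: "Pow S \<inter> insert a ` Pow S = {}" using insert by auto
  have inj: "inj_on (insert a) (Pow S)" using insert unfolding inj_on_def by auto
  have fin: "finite (Pow S)" using insert by simp
  have "(\<Sum>K\<in>insert a ` Pow S. (-1::real) ^ card K) = (\<Sum>K\<in>Pow S. (-1::real) ^ card (insert a K))"
    by (simp add: sum.reindex[OF inj])
  also have "\<dots> = (\<Sum>K\<in>Pow S. - ((-1::real) ^ card K))"
  proof (rule sum.cong)
    fix K assume "K \<in> Pow S"
    then have "finite K" "a \<notin> K" using insert finite_subset by auto
    then show "(-1::real) ^ card (insert a K) = - ((-1) ^ card K)" by simp
  qed simp
  finally have "(\<Sum>K\<in>insert a ` Pow S. (-1::real) ^ card K) = - (\<Sum>K\<in>Pow S. (-1::real) ^ card K)"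
    by (simp add: sum_negf)
  moreover have fin2: "finite (insert a ` Pow S)" using fin by simp
  ultimately show ?case
    using insert.hyps by (simp add: P sum.union_disjoint[OF fin fin2 d])
qed

definition mul :: "'v set \<Rightarrow> 'v list set \<Rightarrow> 'v list set" where
  "mul K D = cls (lst K @ rep D)"

definition dv :: "'v set \<Rightarrow> 'v list set \<Rightarrow> 'v list set" where
  "dv K C = cls (SOME s. lst K @ s \<in> C)"

lemma CF_core:
  assumes W: "finite W" and N: "N \<subseteq> W"
  shows "(\<Sum>K\<in>{K\<in>cl N. card K \<le> n}. (-1) ^ card K * prod y K * A W y (n - card K))
       = (\<Sum>C\<in>{C\<in>Qn W n. MinC C \<inter> N = {}}. mono y C)"
proof -
  have finN: "finite N" using W N finite_subset by blast
  have fincl: "finite {K\<in>cl N. card K \<le> n}" using finN unfolding cl_def by auto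
  let ?S1 = "SIGMA K:{K\<in>cl N. card K \<le> n}. Qn W (n - card K)"
  let ?S2 = "SIGMA C:Qn W n. Pow (MinC C \<inter> N)"
  let ?g = "\<lambda>(K, D). (-1) ^ card K * prod y K * mono y D"
  let ?h = "\<lambda>(C, K). (-1::real) ^ card K * mono y C"
  have "(\<Sum>K\<in>{K\<in>cl N. card K \<le> n}. (-1) ^ card K * prod y K * A W y (n - card K))
      = (\<Sum>K\<in>{K\<in>cl N. card K \<le> n}. \<Sum>D\<in>Qn W (n - card K). (-1) ^ card K * prod y K * mono y D)"
    unfolding A_def by (simp add: sum_distrib_left)
  also have "\<dots> = sum ?g ?S1"
    by (rule sum.Sigma) (use fincl finite_Qn[OF W] in auto)
  also have "\<dots> = sum ?h ?S2"
  proof (rule sum.reindex_bij_witness[where j = "\<lambda>(K, D). (mul K D, K)" and i = "\<lambda>(C, K). (K, dv K C)"])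
    fix a assume a: "a \<in> ?S1"
    then obtain K D where aKD: "a = (K, D)" and K: "K \<in> cl N" "card K \<le> n" and D: "D \<in> Qn W (n - card K)" by blast
    have fK: "finite K" using K finN unfolding cl_def by (auto intro: finite_subset)
    have lK: "distinct (lst K)" "set (lst K) = K" using lst[OF fK] by auto
    have Dr: "cls (rep D) = D" "set (rep D) \<subseteq> W" using D Q_rep unfolding Qn_def by auto
    have lenD: "length (rep D) = n - card K" using D unfolding Qn_def len_def by auto
    have "dv K (mul K D) = D"
    proof -
      have ex: "\<exists>s. lst K @ s \<in> mul K D" unfolding mul_def by (rule exI[of _ "rep D"]) simp
      have "lst K @ (SOME s. lst K @ s \<in> mul K D) \<in> mul K D" using someI_ex[OF ex] .
      then have "eqv (lst K @ rep D) (lst K @ (SOME s. lst K @ s \<in> mul K D))" unfolding mul_def by simp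
      then have "eqv (rep D) (SOME s. lst K @ s \<in> mul K D)" by (rule eqv_cancel)
      then show ?thesis unfolding dv_def using Dr by (metis cls_eq_iff eqv_sym)
    qed
    then show "(\<lambda>(C, K). (K, dv K C)) ((\<lambda>(K, D). (mul K D, K)) a) = a" using aKD by simp
    have s1: "set (lst K @ rep D) \<subseteq> W" using lK Dr K N unfolding cl_def by auto
    have "length (lst K) = card K" using lK distinct_card by metis
    then have s2: "length (lst K @ rep D) = n" using lenD K(2) by simp
    have "mul K D \<in> Qn W n"
      unfolding Qn_iff mul_def using s1 s2 by blast
    moreover have cK: "is_clique E K" "K \<subseteq> N" using K unfolding cl_def by auto
    moreover have "K \<subseteq> MinC (mul K D)"
      unfolding mul_def using div_iff[OF fK cK(1), of "lst K @ rep D"] eqv_refl by blast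
    ultimately show "(\<lambda>(K, D). (mul K D, K)) a \<in> ?S2" using aKD by simp
    have pK: "prod y K = prod_list (map y (lst K))" using lK by (metis prod.distinct_set_conv_list)
    have "mono y (mul K D) = prod y K * mono y D" unfolding mul_def mono_cls pK by (simp add: mono_def)
    then show "?h ((\<lambda>(K, D). (mul K D, K)) a) = ?g a"
      using aKD by simp
  next
    fix b assume b: "b \<in> ?S2"
    obtain C K where bCK: "b = (C, K)" by (cases b)
    have C: "C \<in> Qn W n" and K: "K \<subseteq> MinC C" "K \<subseteq> N" using b bCK by auto
    obtain w where w: "set w \<subseteq> W" "length w = n" "C = cls w" using C unfolding Qn_iff by blast
    have fK: "finite K" using K(2) finN by (rule finite_subset)
    have cK: "is_clique E K" using K(1) MinC_clique[of w] unfolding w(3) is_clique_def by blast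
    have lK: "distinct (lst K)" "set (lst K) = K" using lst[OF fK] by auto
    have "\<exists>s. eqv w (lst K @ s)" using div_iff[OF fK cK, of w] K(1) w(3) by blast
    then have ex: "\<exists>s. lst K @ s \<in> C" using w(3) by simp
    define s where "s = (SOME s. lst K @ s \<in> C)"
    have s: "eqv w (lst K @ s)" using someI_ex[OF ex] w unfolding s_def by simp
    have "eqv (lst K @ s) (lst K @ rep (cls s))" by (rule eqv_app[OF eqv_refl rep_cls])
    then have "eqv w (lst K @ rep (cls s))" using s by (rule eqv_trans[rotated])
    then have "mul K (dv K C) = C"
      unfolding mul_def dv_def s_def[symmetric] using w(3) cls_eq_iff eqv_sym by blast
    then show "(\<lambda>(K, D). (mul K D, K)) ((\<lambda>(C, K). (K, dv K C)) b) = b" using bCK by simp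
    have lKc: "length (lst K) = card K" using lK distinct_card by metis
    have lw: "length w = card K + length s" using eqv_length[OF s] lKc by simp
    have sw: "set s \<subseteq> W" using eqv_set[OF s] w(1) by auto
    have "K \<subseteq> set w" using K(1) MinC_sub[of w] unfolding w(3) by (rule subset_trans)
    then have "card K \<le> card (set w)" by (rule card_mono[OF List.finite_set])
    then have ck: "card K \<le> n" using card_length[of w] w(2) by linarith
    have ls: "length s = n - card K" using lw w(2) by linarith
    have "dv K C \<in> Qn W (n - card K)" unfolding Qn_iff dv_def s_def[symmetric]
      by (rule exI[of _ s]) (use ls sw in auto)
    then show "(\<lambda>(C, K). (K, dv K C)) b \<in> ?S1" using bCK K cK ck unfolding cl_def by auto
  qed
  also have "\<dots> = (\<Sum>C\<in>Qn W n. \<Sum>K\<in>Pow (MinC C \<inter> N). (-1::real) ^ card K * mono y C)"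
    by (rule sum.Sigma[symmetric]) (use finite_Qn[OF W] finN in auto)
  also have "\<dots> = (\<Sum>C\<in>Qn W n. mono y C * (if MinC C \<inter> N = {} then 1 else 0))"
  proof (rule sum.cong[OF refl])
    fix C assume "C \<in> Qn W n"
    have "finite (MinC C \<inter> N)" using finN by simp
    then show "(\<Sum>K\<in>Pow (MinC C \<inter> N). (-1::real) ^ card K * mono y C) = mono y C * (if MinC C \<inter> N = {} then 1 else 0)"
    proof -
      have "(\<Sum>K\<in>Pow (MinC C \<inter> N). (-1::real) ^ card K * mono y C) = (\<Sum>K\<in>Pow (MinC C \<inter> N). (-1::real) ^ card K) * mono y C"
        by (rule sum_distrib_right[symmetric])
      also have "\<dots> = mono y C * (if MinC C \<inter> N = {} then 1 else 0)"
        by (subst alt_sum[OF \<open>finite (MinC C \<inter> N)\<close>]) simp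
      finally show ?thesis .
    qed
  qed
  also have "\<dots> = (\<Sum>C\<in>{C\<in>Qn W n. MinC C \<inter> N = {}}. mono y C)"
    using finite_Qn[OF W] by (simp add: sum.inter_filter if_distrib cong: if_cong)
  finally show ?thesis .
qed

end



lemma poly_sums:
  fixes f G :: "real fps"
  assumes fz: "\<And>j. j > J \<Longrightarrow> f $ j = 0" and sG: "summable (\<lambda>n. G $ n)"
  shows "(\<lambda>n. (f * G) $ n) sums ((\<Sum>j\<le>J. f $ j) * (\<Sum>n. G $ n))"
proof -
  define h where "h j n = (if j \<le> n then G $ (n - j) else 0)" for j n
  have eq: "(f * G) $ n = (\<Sum>j\<le>J. f $ j * h j n)" for n
  proof -
    have "(f * G) $ n = (\<Sum>i=0..n. f $ i * G $ (n - i))" by (rule fps_mult_nth)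
    also have "\<dots> = (\<Sum>i\<in>{0..n} \<inter> {..J}. f $ i * G $ (n - i))"
      by (rule sum.mono_neutral_right) (use fz in auto)
    also have "\<dots> = (\<Sum>i\<in>{..J} \<inter> {0..n}. f $ i * h i n)"
      by (rule sum.cong) (auto simp: h_def)
    also have "\<dots> = (\<Sum>j\<le>J. f $ j * h j n)"
      by (rule sum.mono_neutral_left) (auto simp: h_def)
    finally show ?thesis .
  qed
  have hs: "h j sums (\<Sum>n. G $ n)" for j
  proof -
    have "(\<lambda>i. h j (i + j)) sums (\<Sum>n. G $ n)" using summable_sums[OF sG] by (simp add: h_def)
    moreover have "(\<Sum>i<j. h j i) = 0" by (simp add: h_def)
    ultimately show ?thesis using sums_iff_shift[of "h j" j] by simp
  qed
  have "(\<lambda>n. \<Sum>j\<le>J. f $ j * h j n) sums (\<Sum>j\<le>J. f $ j * (\<Sum>n. G $ n))"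
    by (rule sums_sum) (rule sums_mult[OF hs])
  then show ?thesis by (simp add: eq sum_distrib_right)
qed

context sg begin

definition Kf :: "'v set \<Rightarrow> ('v \<Rightarrow> real) \<Rightarrow> real fps" where
  "Kf N y = Abs_fps (\<lambda>j. \<Sum>K\<in>{K\<in>cl N. card K = j}. (-1) ^ j * prod y K)"

definition Ff :: "'v set \<Rightarrow> ('v \<Rightarrow> real) \<Rightarrow> real fps" where
  "Ff W y = Abs_fps (A W y)"

lemma finite_cl: "finite W \<Longrightarrow> finite (cl W)"
  unfolding cl_def by (rule finite_subset[of _ "Pow W"]) auto

lemma CF_fps:
  assumes W: "finite W" and N: "N \<subseteq> W"
  shows "(Kf N y * Ff W y) $ n = (\<Sum>C\<in>{C\<in>Qn W n. MinC C \<inter> N = {}}. mono y C)"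
proof -
  have finN: "finite N" using W N finite_subset by blast
  let ?h = "\<lambda>K. (-1) ^ card K * prod y K * A W y (n - card K)"
  have "(Kf N y * Ff W y) $ n = (\<Sum>i=0..n. Kf N y $ i * A W y (n - i))"
    by (simp add: fps_mult_nth Ff_def)
  also have "\<dots> = (\<Sum>i\<in>{0..n}. \<Sum>K\<in>{K \<in> {K\<in>cl N. card K \<le> n}. card K = i}. ?h K)"
  proof (rule sum.cong[OF refl])
    fix i assume i: "i \<in> {0..n}"
    have s: "{K \<in> {K\<in>cl N. card K \<le> n}. card K = i} = {K\<in>cl N. card K = i}" using i by auto
    show "Kf N y $ i * A W y (n - i) = (\<Sum>K\<in>{K \<in> {K\<in>cl N. card K \<le> n}. card K = i}. ?h K)"
      unfolding s Kf_def by (simp add: sum_distrib_right)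
  qed
  also have "\<dots> = (\<Sum>K\<in>{K\<in>cl N. card K \<le> n}. ?h K)"
    by (rule sum.group) (use finite_cl[OF finN] in auto)
  also have "\<dots> = (\<Sum>C\<in>{C\<in>Qn W n. MinC C \<inter> N = {}}. mono y C)"
    by (rule CF_core[OF W N])
  finally show ?thesis .
qed

lemma MinC_empty: "MinC (cls w) = {} \<longleftrightarrow> w = []"
proof
  assume a: "MinC (cls w) = {}"
  show "w = []"
  proof (cases w)
    case (Cons b l)
    then have "b \<in> MinC (cls w)" by (simp add: MinC_cls)
    with a show ?thesis by simp
  qed simp
next
  assume "w = []"
  then show "MinC (cls w) = {}" using MinC_sub[of "[]"] by simp
qed

lemma CF_one:
  assumes W: "finite W"
  shows "Kf W y * Ff W y = 1"
proof (rule fps_ext)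
  fix n
  have "{C\<in>Qn W n. MinC C \<inter> W = {}} = (if n = 0 then {cls []} else {})"
  proof (rule set_eqI)
    fix C
    show "C \<in> {C\<in>Qn W n. MinC C \<inter> W = {}} \<longleftrightarrow> C \<in> (if n = 0 then {cls []} else {})"
    proof
      assume "C \<in> {C\<in>Qn W n. MinC C \<inter> W = {}}"
      then obtain w where w: "set w \<subseteq> W" "length w = n" "C = cls w" "MinC C \<inter> W = {}"
        unfolding Qn_iff by blast
      then have "MinC C = {}" using MinC_sub[of w] by blast
      then have "w = []" using w MinC_empty by blast
      then show "C \<in> (if n = 0 then {cls []} else {})" using w by simp
    next
      assume "C \<in> (if n = 0 then {cls []} else {})"
      then have "n = 0" "C = cls []" by (auto split: if_splits)
      then show "C \<in> {C\<in>Qn W n. MinC C \<inter> W = {}}"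
        using MinC_empty[of "[]"] unfolding Qn_iff by auto
    qed
  qed
  then show "(Kf W y * Ff W y) $ n = 1 $ n"
    unfolding CF_fps[OF W order_refl] by simp
qed

lemma mono_nonneg: "C \<in> Q W \<Longrightarrow> (\<forall>v\<in>W. 0 \<le> y v) \<Longrightarrow> 0 \<le> mono y C"
proof -
  assume C: "C \<in> Q W" and y: "\<forall>v\<in>W. 0 \<le> y v"
  obtain w where w: "set w \<subseteq> W" "C = cls w" using C Q_iff by blast
  have "0 \<le> prod_list (map y w)" using w(1) y
    by (induction w) auto
  then show ?thesis using w by simp
qed

lemma A_nonneg: "(\<forall>v\<in>W. 0 \<le> y v) \<Longrightarrow> 0 \<le> A W y n"
  unfolding A_def by (rule sum_nonneg) (use mono_nonneg in \<open>auto simp: Qn_def\<close>)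

lemma CF_nonneg: "finite W \<Longrightarrow> N \<subseteq> W \<Longrightarrow> (\<forall>v\<in>W. 0 \<le> y v) \<Longrightarrow> 0 \<le> (Kf N y * Ff W y) $ n"
  unfolding CF_fps by (rule sum_nonneg) (use mono_nonneg in \<open>auto simp: Qn_def\<close>)

lemma Kf_zero: "finite N \<Longrightarrow> j > card N \<Longrightarrow> Kf N y $ j = 0"
proof -
  assume "finite N" "j > card N"
  have "card K \<le> card N" if "K \<in> cl N" for K using that card_mono[OF \<open>finite N\<close>] unfolding cl_def by blast
  then have e: "{K\<in>cl N. card K = j} = {}" using \<open>j > card N\<close> by force
  have "Kf N y $ j = (\<Sum>K\<in>{K\<in>cl N. card K = j}. (-1) ^ j * prod y K)" by (simp add: Kf_def)
  also have "\<dots> = 0" by (simp only: e sum.empty)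
  finally show ?thesis .
qed

lemma Kf_eval: "finite N \<Longrightarrow> (\<Sum>j\<le>card N. Kf N y $ j) = clique_poly N E y"
proof -
  assume fN: "finite N"
  let ?h = "\<lambda>K. (-1) ^ card K * prod y K"
  have "(\<Sum>j\<le>card N. Kf N y $ j) = (\<Sum>j\<in>{..card N}. \<Sum>K\<in>{K\<in>cl N. card K = j}. ?h K)"
    unfolding Kf_def by simp
  also have "\<dots> = (\<Sum>K\<in>cl N. ?h K)"
  proof (rule sum.group)
    show "card ` cl N \<subseteq> {..card N}" using card_mono[OF fN] unfolding cl_def by auto
  qed (use finite_cl[OF fN] in auto)
  finally show ?thesis unfolding clique_poly_def cl_def by simp
qed

lemma K_times_sum:
  assumes W: "finite W" and s: "summable (A W y)"
  shows "clique_poly W E y * suminf (A W y) = 1"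
proof -
  have "(\<lambda>n. (Kf W y * Ff W y) $ n) sums ((\<Sum>j\<le>card W. Kf W y $ j) * (\<Sum>n. Ff W y $ n))"
    by (rule poly_sums) (use Kf_zero[OF W] s in \<open>auto simp: Ff_def\<close>)
  then have "(\<lambda>n. (1::real fps) $ n) sums (clique_poly W E y * suminf (A W y))"
    using CF_one[OF W] Kf_eval[OF W] by (simp add: Ff_def)
  moreover have "(\<lambda>n. (1::real fps) $ n) sums 1" using sums_single[of 0 "\<lambda>_. 1::real"] by simp
  ultimately show ?thesis using sums_unique2 by blast
qed

end



context sg begin

lemma cl_split:
  assumes v: "v \<in> W"
  defines "N \<equiv> {u\<in>W. E v u}"
  shows "cl W = cl (W - {v}) \<union> insert v ` cl N"
    and "cl (W - {v}) \<inter> insert v ` cl N = {}"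
    and "inj_on (insert v) (cl N)"
    and "v \<notin> N"
proof -
  show vN: "v \<notin> N" unfolding N_def using irrE by blast
  show "cl W = cl (W - {v}) \<union> insert v ` cl N"
  proof (rule set_eqI)
    fix K
    show "K \<in> cl W \<longleftrightarrow> K \<in> cl (W - {v}) \<union> insert v ` cl N"
    proof
      assume K: "K \<in> cl W"
      show "K \<in> cl (W - {v}) \<union> insert v ` cl N"
      proof (cases "v \<in> K")
        case True
        have "K - {v} \<in> cl N" using K True unfolding cl_def N_def is_clique_def by auto
        moreover have "K = insert v (K - {v})" using True by auto
        ultimately show ?thesis by blast
      next
        case False
        then show ?thesis using K unfolding cl_def by auto
      qed
    next
      assume "K \<in> cl (W - {v}) \<union> insert v ` cl N"
      then show "K \<in> cl W"
      proof
        assume "K \<in> cl (W - {v})" then show ?thesis unfolding cl_def by auto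
      next
        assume "K \<in> insert v ` cl N"
        then obtain K' where K': "K = insert v K'" "K' \<in> cl N" by blast
        then show ?thesis using v symE unfolding cl_def N_def is_clique_def by auto
      qed
    qed
  qed
  show "cl (W - {v}) \<inter> insert v ` cl N = {}" unfolding cl_def by auto
  show "inj_on (insert v) (cl N)"
  proof (rule inj_onI)
    fix x z assume "x \<in> cl N" "z \<in> cl N" "insert v x = insert v z"
    then have "v \<notin> x" "v \<notin> z" using vN unfolding cl_def by auto
    then show "x = z" using \<open>insert v x = insert v z\<close> insert_ident by metis
  qed
qed

lemma clique_poly_split:
  assumes W: "finite W" and v: "v \<in> W"
  shows "clique_poly W E y = clique_poly (W - {v}) E y - y v * clique_poly {u\<in>W. E v u} E y"
proof -
  define N where "N = {u\<in>W. E v u}"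
  note s = cl_split[OF v, folded N_def]
  have fN: "finite N" using W unfolding N_def by simp
  let ?h = "\<lambda>K. (-1::real) ^ card K * prod y K"
  have "clique_poly W E y = sum ?h (cl W)" unfolding clique_poly_def cl_def by simp
  also have "\<dots> = sum ?h (cl (W - {v})) + sum ?h (insert v ` cl N)"
    unfolding s(1) by (rule sum.union_disjoint) (use finite_cl W fN s(2) in auto)
  also have "sum ?h (insert v ` cl N) = sum (\<lambda>K. ?h (insert v K)) (cl N)"
    by (rule sum.reindex[OF s(3), unfolded comp_def])
  also have "\<dots> = sum (\<lambda>K. - (y v * ?h K)) (cl N)"
  proof (rule sum.cong[OF refl])
    fix K assume "K \<in> cl N"
    then have "finite K" "v \<notin> K" using fN s(4) finite_subset unfolding cl_def by auto
    then show "?h (insert v K) = - (y v * ?h K)" by simp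
  qed
  finally show ?thesis unfolding clique_poly_def cl_def N_def by (simp add: sum_negf sum_distrib_left)
qed

lemma Kf_split:
  assumes W: "finite W" and v: "v \<in> W"
  shows "Kf W y = Kf (W - {v}) y - fps_const (y v) * (fps_X * Kf {u\<in>W. E v u} y)"
proof (rule fps_ext)
  fix j
  define N where "N = {u\<in>W. E v u}"
  note s = cl_split[OF v, folded N_def]
  have fN: "finite N" using W unfolding N_def by simp
  let ?h = "\<lambda>K. (-1::real) ^ card K * prod y K"
  have cardins: "card (insert v K) = Suc (card K)" if "K \<in> cl N" for K
  proof -
    have "finite K" "v \<notin> K" using that fN s(4) finite_subset unfolding cl_def by auto
    then show ?thesis by simp
  qed
  have Kfj: "Kf U y $ jj = sum ?h {K\<in>cl U. card K = jj}" for U jj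
  proof -
    have "Kf U y $ jj = (\<Sum>K\<in>{K\<in>cl U. card K = jj}. (-1) ^ jj * prod y K)" by (simp add: Kf_def)
    also have "\<dots> = sum ?h {K\<in>cl U. card K = jj}" by (rule sum.cong) auto
    finally show ?thesis .
  qed
  have e1: "{K\<in>cl W. card K = j} = {K\<in>cl (W - {v}). card K = j} \<union> {K \<in> insert v ` cl N. card K = j}"
    unfolding s(1) by blast
  have e2: "{K \<in> insert v ` cl N. card K = j} = insert v ` {K\<in>cl N. Suc (card K) = j}"
  proof (rule set_eqI, rule iffI)
    fix x assume "x \<in> {K \<in> insert v ` cl N. card K = j}"
    then obtain K' where "K' \<in> cl N" "x = insert v K'" "card x = j" by blast
    then show "x \<in> insert v ` {K\<in>cl N. Suc (card K) = j}" using cardins by auto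
  next
    fix x assume "x \<in> insert v ` {K\<in>cl N. Suc (card K) = j}"
    then obtain K' where "K' \<in> cl N" "x = insert v K'" "Suc (card K') = j" by blast
    then show "x \<in> {K \<in> insert v ` cl N. card K = j}" using cardins by auto
  qed
  have "{K\<in>cl W. card K = j} = {K\<in>cl (W - {v}). card K = j} \<union> insert v ` {K\<in>cl N. Suc (card K) = j}"
    using e1 e2 by simp
  note eq = this
  have f1: "finite {K\<in>cl (W - {v}). card K = j}" using finite_cl[of "W - {v}"] W by simp
  have f2: "finite (insert v ` {K\<in>cl N. Suc (card K) = j})" using finite_cl[OF fN] by simp
  have d: "{K\<in>cl (W - {v}). card K = j} \<inter> insert v ` {K\<in>cl N. Suc (card K) = j} = {}" using s(2) by blast
  have "Kf W y $ j = sum ?h {K\<in>cl (W - {v}). card K = j} + sum ?h (insert v ` {K\<in>cl N. Suc (card K) = j})"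
    unfolding Kfj eq by (rule sum.union_disjoint[OF f1 f2 d])
  also have inj: "inj_on (insert v) {K\<in>cl N. Suc (card K) = j}" by (rule inj_on_subset[OF s(3)]) auto
  have "sum ?h (insert v ` {K\<in>cl N. Suc (card K) = j}) = sum (\<lambda>K. ?h (insert v K)) {K\<in>cl N. Suc (card K) = j}"
    by (rule sum.reindex[OF inj, unfolded comp_def])
  also have "\<dots> = sum (\<lambda>K. - (y v * ?h K)) {K\<in>cl N. Suc (card K) = j}"
  proof (rule sum.cong[OF refl])
    fix K assume "K \<in> {K\<in>cl N. Suc (card K) = j}"
    then have "finite K" "v \<notin> K" using fN s(4) finite_subset unfolding cl_def by auto
    then show "?h (insert v K) = - (y v * ?h K)" by simp
  qed
  also have "\<dots> = - (y v * (if j = 0 then 0 else Kf N y $ (j - 1)))"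
  proof (cases j)
    case 0 then show ?thesis by simp
  next
    case (Suc i)
    have "{K\<in>cl N. Suc (card K) = j} = {K\<in>cl N. card K = i}" using Suc by auto
    then have "sum (\<lambda>K. - (y v * ?h K)) {K\<in>cl N. Suc (card K) = j} = - (y v * sum ?h {K\<in>cl N. card K = i})"
      by (simp add: sum_negf sum_distrib_left)
    then show ?thesis using Suc Kfj[of N i] by simp
  qed
  finally have fin: "Kf W y $ j = sum ?h {K\<in>cl (W - {v}). card K = j} + - (y v * (if j = 0 then 0 else Kf N y $ (j - 1)))" .
  show "Kf W y $ j = (Kf (W - {v}) y - fps_const (y v) * (fps_X * Kf {u\<in>W. E v u} y)) $ j"
    unfolding N_def[symmetric] using fin Kfj[of "W - {v}" j] by simp
qed

definition cut :: "nat \<Rightarrow> real fps \<Rightarrow> real fps" where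
  "cut M F = Abs_fps (\<lambda>n. if n \<le> M then F $ n else 0)"

lemma shift_le:
  fixes g :: "nat \<Rightarrow> real"
  assumes "\<And>m. 0 \<le> g m"
  shows "(\<Sum>n\<le>M. (if n = 0 then 0 else g (n - 1))) \<le> (\<Sum>m\<le>M. g m)"
proof (cases M)
  case 0 then show ?thesis using assms by simp
next
  case (Suc M')
  have "(\<Sum>n\<le>M. (if n = 0 then 0 else g (n - 1))) = (\<Sum>m\<le>M'. g m)"
    unfolding Suc sum.atMost_Suc_shift by simp
  also have "\<dots> \<le> (\<Sum>m\<le>M. g m)" unfolding Suc using assms by simp
  finally show ?thesis .
qed

lemma summ_main:
  "finite W \<Longrightarrow> (\<forall>v\<in>W. 0 \<le> y v) \<Longrightarrow> (\<forall>U\<subseteq>W. clique_poly U E y > 0) \<Longrightarrow> summable (A W y)"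
proof (induction W rule: finite_psubset_induct)
  case (psubset W)
  show ?case
  proof (cases "W = {}")
    case True
    have "A W y n = (if n = 0 then 1 else 0)" for n
    proof -
      have i: "C \<in> Qn W n \<longleftrightarrow> n = 0 \<and> C = cls []" for C unfolding Qn_iff True by auto
      have "Qn W n = (if n = 0 then {cls []} else {})" by (rule set_eqI) (simp add: i)
      then show ?thesis by (simp add: A_def)
    qed
    then show ?thesis using sums_single[of 0 "\<lambda>_. 1::real"] sums_summable by (simp add: fun_eq_iff)
  next
    case False
    then obtain v where v: "v \<in> W" by blast
    define W' where "W' = W - {v}"
    define N where "N = {u\<in>W. E v u}"
    define c where "c = y v"
    have vN: "v \<notin> N" unfolding N_def using irrE by blast
    have NW': "N \<subseteq> W'" unfolding N_def W'_def using vN N_def by auto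
    have fW': "finite W'" using psubset.hyps unfolding W'_def by simp
    have fN: "finite N" using psubset.hyps unfolding N_def by simp
    have yW: "\<forall>v\<in>W. 0 \<le> y v" using psubset.prems by simp
    have yW': "\<forall>v\<in>W'. 0 \<le> y v" using yW unfolding W'_def by simp
    have c0: "0 \<le> c" using yW v unfolding c_def by simp
    have sb: "summable (A W' y)"
      using psubset.IH[of W'] psubset.prems v unfolding W'_def by auto
    define B where "B = suminf (A W' y)"
    have KB: "clique_poly W' E y * B = 1" unfolding B_def by (rule K_times_sum[OF fW' sb])
    have b0: "\<And>n. 0 \<le> A W' y n" using A_nonneg[OF yW'] .
    have B0: "0 \<le> B" unfolding B_def using suminf_nonneg[OF sb b0] .
    have pos: "clique_poly W E y > 0" "clique_poly W' E y > 0" "clique_poly N E y > 0"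
      using psubset.prems(2) unfolding W'_def N_def by auto
    have Bpos: "B > 0" using KB B0 pos(2) by (metis less_eq_real_def mult_zero_right zero_neq_one)
    have split: "clique_poly W E y = clique_poly W' E y - c * clique_poly N E y"
      unfolding W'_def N_def c_def by (rule clique_poly_split[OF psubset.hyps v])
    define P where "P = Kf N y * Ff W' y"
    have P0: "\<And>n. 0 \<le> P $ n" unfolding P_def by (rule CF_nonneg[OF fW' NW' yW'])
    have Psums: "(\<lambda>n. P $ n) sums (clique_poly N E y * B)"
    proof -
      have "(\<lambda>n. P $ n) sums ((\<Sum>j\<le>card N. Kf N y $ j) * (\<Sum>n. Ff W' y $ n))"
        unfolding P_def by (rule poly_sums) (use Kf_zero[OF fN] sb in \<open>auto simp: Ff_def\<close>)
      then show ?thesis using Kf_eval[OF fN] by (simp add: Ff_def B_def)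
    qed
    define r where "r = c * (clique_poly N E y * B)"
    have r1: "r < 1"
    proof -
      have "0 < clique_poly W E y * B" using pos(1) Bpos by simp
      also have "\<dots> = 1 - r" unfolding split r_def using KB by (simp add: algebra_simps)
      finally show ?thesis by simp
    qed
    have r0: "0 \<le> r" unfolding r_def using c0 pos(3) B0 by simp
    have K1: "Kf W y * Ff W y = 1" by (rule CF_one[OF psubset.hyps])
    have K2: "Kf W' y * Ff W' y = 1" by (rule CF_one[OF fW'])
    have rel: "Kf W' y = Kf W y + fps_const c * (fps_X * Kf N y)"
      using Kf_split[OF psubset.hyps v, of y] unfolding W'_def N_def c_def by simp
    have Fid: "Ff W y = Ff W' y + fps_const c * (fps_X * (P * Ff W y))"
    proof -
      have "Ff W y = (Kf W' y * Ff W' y) * Ff W y" using K2 by simp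
      also have "\<dots> = Ff W' y * (Kf W y * Ff W y) + fps_const c * (fps_X * ((Kf N y * Ff W' y) * Ff W y))"
        unfolding rel by (simp add: algebra_simps)
      also have "\<dots> = Ff W' y + fps_const c * (fps_X * (P * Ff W y))" using K1 unfolding P_def by simp
      finally show ?thesis .
    qed
    have a0: "\<And>n. 0 \<le> A W y n" using A_nonneg[OF yW] .
    define g where "g m = (P * Ff W y) $ m" for m
    have g0: "0 \<le> g m" for m unfolding g_def fps_mult_nth
      by (rule sum_nonneg) (use P0 a0 in \<open>auto simp: Ff_def\<close>)
    have an: "A W y n = A W' y n + c * (if n = 0 then 0 else g (n - 1))" for n
      using arg_cong[OF Fid, of "\<lambda>F. F $ n"] by (simp add: Ff_def g_def)
    have bound: "(\<Sum>n\<le>M. A W y n) \<le> B / (1 - r)" for M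
    proof -
      let ?s = "\<Sum>n\<le>M. A W y n"
      have s0: "0 \<le> ?s" using a0 by (simp add: sum_nonneg)
      have cut0: "0 \<le> cut M (Ff W y) $ n" for n unfolding cut_def using a0 by (simp add: Ff_def)
      have cs: "(\<lambda>m. (cut M (Ff W y) * P) $ m) sums ((\<Sum>j\<le>M. cut M (Ff W y) $ j) * (\<Sum>n. P $ n))"
        by (rule poly_sums) (use Psums sums_summable in \<open>auto simp: cut_def\<close>)
      have "(\<Sum>j\<le>M. cut M (Ff W y) $ j) = ?s" unfolding cut_def by (simp add: Ff_def)
      moreover have "(\<Sum>n. P $ n) = clique_poly N E y * B" using Psums sums_unique by metis
      ultimately have cs': "(\<lambda>m. (cut M (Ff W y) * P) $ m) sums (?s * (clique_poly N E y * B))" using cs by simp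
      have geq: "g m = (cut M (Ff W y) * P) $ m" if "m \<le> M" for m
        unfolding g_def mult.commute[of P] fps_mult_nth using that
        by (intro sum.cong) (auto simp: cut_def)
      have "(\<Sum>m\<le>M. g m) = (\<Sum>m\<le>M. (cut M (Ff W y) * P) $ m)" using geq by simp
      also have "\<dots> \<le> ?s * (clique_poly N E y * B)"
      proof (rule sums_le[OF _ sums_If_finite_set cs'])
        show "finite {..M}" by simp
      qed (auto simp: fps_mult_nth intro!: sum_nonneg mult_nonneg_nonneg cut0 P0)
      finally have gle: "(\<Sum>m\<le>M. g m) \<le> ?s * (clique_poly N E y * B)" .
      have "?s = (\<Sum>n\<le>M. A W' y n) + c * (\<Sum>n\<le>M. (if n = 0 then 0 else g (n - 1)))"
        unfolding an by (simp add: sum.distrib sum_distrib_left)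
      also have "\<dots> \<le> B + c * (?s * (clique_poly N E y * B))"
      proof (rule add_mono)
        show "(\<Sum>n\<le>M. A W' y n) \<le> B" unfolding B_def by (rule sum_le_suminf[OF sb]) (use b0 in auto)
        show "c * (\<Sum>n\<le>M. (if n = 0 then 0 else g (n - 1))) \<le> c * (?s * (clique_poly N E y * B))"
          using shift_le[of g M, OF g0] gle c0 by (intro mult_left_mono) auto
      qed
      also have "\<dots> = B + r * ?s" unfolding r_def by (simp add: algebra_simps)
      finally have "?s * (1 - r) \<le> B" by (simp add: algebra_simps)
      then show ?thesis using r1 by (simp add: pos_le_divide_eq)
    qed
    show ?thesis by (rule bounded_imp_summable[OF a0 bound])
  qed
qed

end


context sg begin

definition nr :: "'v list \<Rightarrow> bool" where
  "nr w \<longleftrightarrow> (\<exists>p c q s. w = p @ [c] @ q @ [c] @ s \<and> (\<forall>d\<in>set q. d = c \<or> E d c))"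

lemma red_iff: "reduced_word E w \<longleftrightarrow> \<not> nr w"
proof
  assume r: "reduced_word E w"
  show "\<not> nr w"
  proof
    assume "nr w"
    then obtain p c q s where w: "w = p @ [c] @ q @ [c] @ s" and q: "\<forall>d\<in>set q. d = c \<or> E d c"
      unfolding nr_def by blast
    define i where "i = length p"
    define j where "j = length p + 1 + length q"
    have ij: "i < j" "j < length w" "w ! i = w ! j" unfolding i_def j_def w by (auto simp: nth_append)
    obtain k where k: "i < k" "k < j" "w ! k \<noteq> w ! i" "\<not> E (w ! k) (w ! i)"
      using r ij unfolding reduced_word_def by blast
    have "w ! k = q ! (k - i - 1)" "k - i - 1 < length q"
      using k unfolding i_def j_def w by (auto simp: nth_append)
    then have "w ! k \<in> set q" by simp
    moreover have "w ! i = c" unfolding i_def w by simp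
    ultimately show False using q k by blast
  qed
next
  assume n: "\<not> nr w"
  show "reduced_word E w"
    unfolding reduced_word_def
  proof (intro allI impI)
    fix i j assume a: "i < j \<and> j < length w \<and> w ! i = w ! j"
    show "\<exists>k>i. k < j \<and> w ! k \<noteq> w ! i \<and> \<not> E (w ! k) (w ! i)"
    proof (rule ccontr)
      assume c: "\<not> ?thesis"
      define p where "p = take i w"
      define q where "q = take (j - i - 1) (drop (Suc i) w)"
      define s where "s = drop (Suc j) w"
      have li: "i < length w" using a by auto
      have w1: "w = p @ w ! i # drop (Suc i) w" unfolding p_def by (rule id_take_nth_drop[OF li])
      have lj: "j - i - 1 < length (drop (Suc i) w)" using a by auto
      have w2: "drop (Suc i) w = q @ (drop (Suc i) w) ! (j - i - 1) # drop (Suc (j - i - 1)) (drop (Suc i) w)"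
        unfolding q_def by (rule id_take_nth_drop[OF lj])
      have e1: "(drop (Suc i) w) ! (j - i - 1) = w ! j" using a by simp
      have e2: "drop (Suc (j - i - 1)) (drop (Suc i) w) = s" unfolding s_def using a by simp
      have "w = p @ [w ! i] @ q @ [w ! j] @ s" using w1 w2 e1 e2 by simp
      moreover have "\<forall>d\<in>set q. d = w ! i \<or> E d (w ! i)"
      proof
        fix d assume "d \<in> set q"
        then obtain l where l: "l < length q" "q ! l = d" by (meson in_set_conv_nth)
        have "q ! l = w ! (Suc i + l)" "Suc i + l < j" using l a unfolding q_def by auto
        then show "d = w ! i \<or> E d (w ! i)" using c l by force
      qed
      ultimately have "nr w" unfolding nr_def using a by metis
      then show False using n by blast
    qed
  qed
qed

definition ex :: "('v \<times> nat) list \<Rightarrow> 'v list" where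
  "ex bl = concat (map (\<lambda>(a, k). replicate k a) bl)"

definition pos :: "('v \<times> nat) list \<Rightarrow> bool" where
  "pos bl \<longleftrightarrow> (\<forall>p\<in>set bl. 1 \<le> snd p)"

definition filt :: "'v \<Rightarrow> ('v \<times> nat) list \<Rightarrow> nat list" where
  "filt a bl = map snd (filter (\<lambda>p. fst p = a) bl)"

lemma ex_simps[simp]: "ex [] = []" "ex ((a, k) # bl) = replicate k a @ ex bl" "ex (Pb @ Qb) = ex Pb @ ex Qb"
  by (auto simp: ex_def)

lemma pos_simps[simp]: "pos [] = True" "pos ((a, k) # bl) \<longleftrightarrow> 1 \<le> k \<and> pos bl" "pos (Pb @ Qb) \<longleftrightarrow> pos Pb \<and> pos Qb"
  by (auto simp: pos_def)

lemma set_ex: "pos bl \<Longrightarrow> set (ex bl) = set (map fst bl)"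
proof (induction bl)
  case (Cons p bl) then show ?case by (cases p) auto
qed simp

lemma set_ex_sub: "set (ex bl) \<subseteq> set (map fst bl)"
proof (induction bl)
  case (Cons p bl) then show ?case by (cases p) auto
qed simp

lemma mv_ex: "pos bl \<Longrightarrow> mv a (ex bl) \<longleftrightarrow> mv a (map fst bl)"
proof (induction bl)
  case Nil then show ?case by (simp add: mv_def)
next
  case (Cons p bl)
  obtain b k where p: "p = (b, k)" by (cases p)
  have k: "1 \<le> k" "pos bl" using Cons.prems p by auto
  then obtain k' where k': "k = Suc k'" by (cases k) auto
  show ?case
  proof (cases "b = a")
    case True then show ?thesis using p k' by simp
  next
    case False
    have "mv a (b # replicate k' b @ ex bl) \<longleftrightarrow> E b a \<and> mv a (replicate k' b @ ex bl)"
      using False by (rule mv_Cons)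
    also have "mv a (replicate k' b @ ex bl) \<longleftrightarrow> (\<forall>c\<in>set (replicate k' b). E c a) \<and> mv a (ex bl)"
      using False by (intro mv_app) simp
    finally have "mv a (replicate k b @ ex bl) \<longleftrightarrow> E b a \<and> mv a (ex bl)" using k' by auto
    then show ?thesis using p False Cons.IH[OF k(2)] by (simp add: mv_Cons)
  qed
qed

lemma nr_app: "nr t \<Longrightarrow> nr (p @ t)"
proof -
  assume "nr t"
  then obtain p' c q s where "t = p' @ [c] @ q @ [c] @ s" "\<forall>d\<in>set q. d = c \<or> E d c"
    unfolding nr_def by blast
  then have "p @ t = (p @ p') @ [c] @ q @ [c] @ s" "\<forall>d\<in>set q. d = c \<or> E d c" by auto
  then show "nr (p @ t)" unfolding nr_def by blast
qed

lemma nr_of_mv: "mv a t \<Longrightarrow> nr (a # t)"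
proof -
  assume "mv a t"
  then have at: "a \<in> set t" and e: "\<forall>b\<in>set (takeWhile (\<lambda>c. c \<noteq> a) t). E b a" unfolding mv_def by auto
  obtain p q where t: "t = p @ a # q" "a \<notin> set p" using at by (meson split_list_first)
  have tw: "a \<notin> set p' \<Longrightarrow> takeWhile (\<lambda>c. c \<noteq> a) (p' @ a # q) = p'" for p'
    by (induction p') auto
  have "takeWhile (\<lambda>c. c \<noteq> a) t = p" using t tw by simp
  then have "\<forall>d\<in>set p. d = a \<or> E d a" using e by auto
  then show "nr (a # t)" unfolding nr_def using t by (intro exI[of _ "[]"] exI[of _ a] exI[of _ p] exI[of _ q]) simp
qed

lemma nr_ins:
  assumes Pb: "\<forall>b\<in>set Pb. E b a" and n: "nr (Pb @ Qb)"
  shows "nr (Pb @ a # Qb)"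
proof -
  obtain p c q s where w: "Pb @ Qb = p @ ([c] @ q @ [c] @ s)" and q: "\<forall>d\<in>set q. d = c \<or> E d c"
    using n unfolding nr_def by blast
  obtain us where us: "(Pb = p @ us \<and> us @ Qb = [c] @ q @ [c] @ s) \<or> (Pb @ us = p \<and> Qb = us @ [c] @ q @ [c] @ s)"
    using w append_eq_append_conv2[of Pb Qb p "[c] @ q @ [c] @ s"] by blast
  show ?thesis
  proof (cases "Pb @ us = p \<and> Qb = us @ [c] @ q @ [c] @ s")
    case True
    then have "Pb @ a # Qb = (Pb @ a # us) @ [c] @ q @ [c] @ s" by simp
    then show ?thesis unfolding nr_def using q by blast
  next
    case False
    then have us1: "Pb = p @ us" "us @ Qb = [c] @ q @ [c] @ s" using us by auto
    show ?thesis
    proof (cases us)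
      case Nil
      then have "Pb @ a # Qb = (p @ [a]) @ [c] @ q @ [c] @ s" using us1 by simp
      then show ?thesis unfolding nr_def using q by blast
    next
      case (Cons c' us')
      then have cc: "c' = c" "us' @ Qb = q @ ([c] @ s)" using us1 by auto
      have Eac: "E a c" using Pb us1 Cons cc symE by auto
      obtain vs where vs: "(us' = q @ vs \<and> vs @ Qb = [c] @ s) \<or> (us' @ vs = q \<and> Qb = vs @ [c] @ s)"
        using cc(2) append_eq_append_conv2[of us' Qb q "[c] @ s"] by blast
      show ?thesis
      proof (cases "us' @ vs = q \<and> Qb = vs @ [c] @ s")
        case True
        then have "Pb @ a # Qb = p @ [c] @ (us' @ a # vs) @ [c] @ s" using us1 Cons cc by simp
        moreover have "\<forall>d\<in>set (us' @ a # vs). d = c \<or> E d c" using q True Eac by auto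
        ultimately show ?thesis unfolding nr_def by blast
      next
        case False
        then have vs1: "us' = q @ vs" "vs @ Qb = [c] @ s" using vs by auto
        show ?thesis
        proof (cases vs)
          case Nil
          then have "Pb @ a # Qb = p @ [c] @ (q @ [a]) @ [c] @ s" using us1 Cons cc vs1 by simp
          moreover have "\<forall>d\<in>set (q @ [a]). d = c \<or> E d c" using q Eac by auto
          ultimately show ?thesis unfolding nr_def by blast
        next
          case (Cons c2 vs')
          then have "c2 = c" "Pb = p @ [c] @ q @ [c] @ vs'" using us1 \<open>us = c' # us'\<close> cc vs1 by auto
          then have "Pb @ a # Qb = p @ [c] @ q @ [c] @ (vs' @ a # Qb)" by simp
          then show ?thesis unfolding nr_def using q by blast
        qed
      qed
    qed
  qed
qed

lemma nr_cons_inv: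
  assumes n: "nr (a # r)" and nn: "\<not> nr r"
  shows "\<exists>q s. r = q @ a # s \<and> a \<notin> set q \<and> (\<forall>d\<in>set q. E d a)"
proof -
  obtain p c q s where w: "a # r = p @ [c] @ q @ [c] @ s" and q: "\<forall>d\<in>set q. d = c \<or> E d c"
    using n unfolding nr_def by blast
  show ?thesis
  proof (cases p)
    case (Cons x p')
    then have "r = p' @ [c] @ q @ [c] @ s" using w by simp
    then have "nr r" unfolding nr_def using q by blast
    then show ?thesis using nn by blast
  next
    case Nil
    then have r: "c = a" "r = q @ [a] @ s" using w by auto
    show ?thesis
    proof (cases "a \<in> set q")
      case True
      then obtain q1 q2 where "q = q1 @ a # q2" by (meson split_list)
      then have "r = q1 @ [a] @ q2 @ [a] @ s" "\<forall>d\<in>set q2. d = a \<or> E d a" using r q by auto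
      then have "nr r" unfolding nr_def by blast
      then show ?thesis using nn by blast
    next
      case False
      then have "\<forall>d\<in>set q. E d a" using q r by auto
      then show ?thesis using r False by auto
    qed
  qed
qed

lemma block_move:
  assumes "\<forall>b\<in>set (map fst Pb). E b a"
  shows "eqv (ex (Pb @ (a, k) # Qb)) (replicate k a @ ex (Pb @ Qb))"
proof -
  have "\<forall>b\<in>set (ex Pb). E b a" using assms set_ex_sub by blast
  then have "eqv (ex Pb @ replicate k a) (replicate k a @ ex Pb)" by (rule commk)
  then have "eqv ((ex Pb @ replicate k a) @ ex Qb) ((replicate k a @ ex Pb) @ ex Qb)" by (rule eqv_app[OF _ eqv_refl])
  then show ?thesis by simp
qed

lemma filt_simps[simp]: "filt a [] = []" "filt a ((b, k) # bl) = (if b = a then k # filt a bl else filt a bl)"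
  "filt a (Pb @ Qb) = filt a Pb @ filt a Qb"
  by (auto simp: filt_def)

lemma filt_notin: "a \<notin> set (map fst Pb) \<Longrightarrow> filt a Pb = []"
  by (induction Pb) auto

lemma filt_eq: "map fst bl = map fst bl' \<Longrightarrow> (\<forall>a. filt a bl = filt a bl') \<Longrightarrow> bl = bl'"
proof (induction bl arbitrary: bl')
  case Nil then show ?case by simp
next
  case (Cons p bl)
  obtain a k where p: "p = (a, k)" by (cases p)
  obtain p' bl2 where bl': "bl' = p' # bl2" using Cons.prems by (cases bl') auto
  obtain a' k' where p': "p' = (a', k')" by (cases p')
  have aa: "a' = a" "map fst bl = map fst bl2" using Cons.prems p bl' p' by auto
  have "filt a bl' = k' # filt a bl2" using bl' p' aa by simp
  moreover have "filt a (p # bl) = k # filt a bl" using p by simp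
  ultimately have kk: "k' = k" "filt a bl = filt a bl2" using Cons.prems(2) by (metis list.inject)+
  have "\<forall>b. filt b bl = filt b bl2"
  proof
    fix b show "filt b bl = filt b bl2"
      using Cons.prems(2) p p' bl' aa kk by (cases "b = a") (auto dest: spec[of _ b])
  qed
  then show ?case using Cons.IH[OF aa(2)] p p' bl' aa kk by simp
qed


end


context sg begin

lemma decomp: "map fst bl = p @ a # q \<Longrightarrow> \<exists>Pb k Qb. bl = Pb @ (a, k) # Qb \<and> map fst Pb = p \<and> map fst Qb = q"
proof -
  assume "map fst bl = p @ a # q"
  then obtain us vs where uv: "bl = us @ vs" "map fst us = p" "map fst vs = a # q"
    by (auto simp: map_eq_append_conv)
  then obtain z Qb where "vs = z # Qb" "fst z = a" "map fst Qb = q" by (auto simp: map_eq_Cons_conv)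
  then show ?thesis using uv by (intro exI[of _ us] exI[of _ "snd z"] exI[of _ Qb]) auto
qed

lemma ex_nil: "pos bl \<Longrightarrow> ex bl = [] \<Longrightarrow> bl = []"
proof (cases bl)
  case (Cons p t)
  assume "pos bl" "ex bl = []"
  then show ?thesis using Cons by (cases p) auto
qed simp

lemma nr_Nil: "\<not> nr []"
  unfolding nr_def by simp

lemma rep_split: "k = m + d \<Longrightarrow> replicate k a @ w = replicate m a @ (replicate d a @ w)"
  by (simp add: replicate_add)

lemma inj_blocks:
  "pos bl \<Longrightarrow> pos bl' \<Longrightarrow> \<not> nr (map fst bl) \<Longrightarrow> \<not> nr (map fst bl') \<Longrightarrow> eqv (ex bl) (ex bl')
   \<Longrightarrow> eqv (map fst bl) (map fst bl') \<and> (\<forall>b. filt b bl = filt b bl')"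
proof (induction bl arbitrary: bl')
  case Nil
  then have "ex bl' = []" using eqv_length by fastforce
  then have "bl' = []" using ex_nil Nil.prems(2) by blast
  then show ?case by simp
next
  case (Cons pr t)
  obtain a m where pr: "pr = (a, m)" by (cases pr)
  have m1: "1 \<le> m" and post: "pos t" using Cons.prems(1) pr by auto
  then obtain m' where m': "m = Suc m'" by (cases m) auto
  have "mv a (ex (pr # t))" using pr m' by simp
  then have "mv a (ex bl')" using Cons.prems(5) eqv_mv by blast
  then have mvb: "mv a (map fst bl')" using mv_ex Cons.prems(2) by blast
  then have "a \<in> set (map fst bl')" unfolding mv_def by blast
  then obtain p q where pq: "map fst bl' = p @ a # q" "a \<notin> set p" by (meson split_list_first)
  then have Ep: "\<forall>b\<in>set p. E b a" using mvb mv_app by simp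
  obtain Pb k Qb where bl': "bl' = Pb @ (a, k) # Qb" "map fst Pb = p" "map fst Qb = q"
    using decomp[OF pq(1)] by blast
  have k1: "1 \<le> k" and posPQ: "pos (Pb @ Qb)" using Cons.prems(2) bl' by auto
  have e1: "eqv (ex bl') (replicate k a @ ex (Pb @ Qb))" unfolding bl'(1) by (rule block_move) (use Ep bl' in simp)
  have e: "eqv (replicate m a @ ex t) (replicate k a @ ex (Pb @ Qb))"
    using Cons.prems(5) e1 pr eqv_trans by auto
  have nrt: "\<not> nr (map fst t)" using Cons.prems(3) pr nr_app[of "map fst t" "[a]"] by auto
  have nrPQ: "\<not> nr (map fst (Pb @ Qb))"
  proof
    assume "nr (map fst (Pb @ Qb))"
    then have "nr (p @ a # q)" using nr_ins[OF Ep] bl' by simp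
    then show False using Cons.prems(4) pq by simp
  qed
  have mk: "m = k"
  proof (rule ccontr)
    assume "m \<noteq> k"
    then consider "m < k" | "k < m" using nat_neq_iff by blast
    then show False
    proof cases
      case 1
      then obtain d where "k = Suc (m + d)" using less_iff_Suc_add by blast
      then have d: "k = m + Suc d" by simp
      have rk: "replicate k a @ X = replicate m a @ (replicate (Suc d) a @ X)" for X
        by (simp only: d replicate_add append.assoc)
      have "eqv (replicate m a @ ex t) (replicate m a @ (replicate (Suc d) a @ ex (Pb @ Qb)))"
        using e unfolding rk .
      then have "eqv (ex t) (a # replicate d a @ ex (Pb @ Qb))" using eqv_cancel by fastforce
      then have "mv a (ex t)" using eqv_mv eqv_sym mv_Cons_self by blast
      then have "mv a (map fst t)" using mv_ex post by blast
      then have "nr (a # map fst t)" by (rule nr_of_mv)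
      then show False using Cons.prems(3) pr by simp
    next
      case 2
      then obtain d where "m = Suc (k + d)" using less_iff_Suc_add by blast
      then have d: "m = k + Suc d" by simp
      have rk: "replicate m a @ X = replicate k a @ (replicate (Suc d) a @ X)" for X
        by (simp only: d replicate_add append.assoc)
      have "eqv (replicate k a @ (replicate (Suc d) a @ ex t)) (replicate k a @ ex (Pb @ Qb))"
        using e unfolding rk .
      then have "eqv (a # replicate d a @ ex t) (ex (Pb @ Qb))" using eqv_cancel by fastforce
      then have "mv a (ex (Pb @ Qb))" using eqv_mv mv_Cons_self by blast
      then have "mv a (map fst (Pb @ Qb))" using mv_ex posPQ by blast
      then have "mv a (p @ q)" using bl' by simp
      then have "mv a q" using mv_app pq(2) by blast
      then have "nr (p @ a # q)" using nr_of_mv nr_app by blast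
      then show False using Cons.prems(4) pq by simp
    qed
  qed
  have "eqv (ex t) (ex (Pb @ Qb))" using e mk eqv_cancel by blast
  then have IH: "eqv (map fst t) (map fst (Pb @ Qb))" "\<forall>b. filt b t = filt b (Pb @ Qb)"
    using Cons.IH[OF post posPQ nrt nrPQ] by auto
  have "eqv (a # map fst t) (a # p @ q)" using IH(1) bl' eqv_Cons by simp
  moreover have "eqv (a # p @ q) (p @ a # q)"
  proof -
    have "eqv (a # p) (p @ [a])" using comm1[OF Ep] eqv_sym by blast
    then have "eqv ((a # p) @ q) ((p @ [a]) @ q)" by (rule eqv_app[OF _ eqv_refl])
    then show ?thesis by simp
  qed
  ultimately have g1: "eqv (map fst (pr # t)) (map fst bl')" using pr pq eqv_trans by simp
  have fPb: "filt a Pb = []" using filt_notin pq(2) bl'(2) by blast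
  have g2: "filt b (pr # t) = filt b bl'" for b
    using IH(2) pr bl'(1) mk fPb by (cases "b = a") auto
  show ?case using g1 g2 by blast
qed

lemma surj_blocks: "\<exists>bl. pos bl \<and> \<not> nr (map fst bl) \<and> eqv w (ex bl)"
proof (induction w)
  case Nil
  show ?case by (rule exI[of _ "[]"]) (simp add: nr_Nil)
next
  case (Cons a w)
  then obtain bl' where bl': "pos bl'" "\<not> nr (map fst bl')" "eqv w (ex bl')" by blast
  show ?case
  proof (cases "nr (a # map fst bl')")
    case False
    have "eqv (a # w) (ex ((a, 1) # bl'))" using eqv_Cons[OF bl'(3)] by simp
    then show ?thesis using False bl' by (intro exI[of _ "(a, 1) # bl'"]) simp
  next
    case True
    obtain q s where qs: "map fst bl' = q @ a # s" "a \<notin> set q" "\<forall>d\<in>set q. E d a"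
      using nr_cons_inv[OF True bl'(2)] by blast
    obtain Pb k Qb where dec: "bl' = Pb @ (a, k) # Qb" "map fst Pb = q" "map fst Qb = s"
      using decomp[OF qs(1)] by blast
    define bl where "bl = Pb @ (a, Suc k) # Qb"
    have "pos bl" using bl'(1) dec unfolding bl_def by simp
    moreover have "map fst bl = map fst bl'" using dec unfolding bl_def by simp
    moreover have "eqv (a # w) (ex bl)"
    proof -
      have "\<forall>b\<in>set (ex Pb). E b a" using qs(3) dec(2) set_ex_sub by blast
      then have "eqv (a # ex Pb) (ex Pb @ [a])" using comm1 eqv_sym by blast
      then have "eqv ((a # ex Pb) @ (replicate k a @ ex Qb)) ((ex Pb @ [a]) @ (replicate k a @ ex Qb))"
        by (rule eqv_app[OF _ eqv_refl])
      then have "eqv (a # ex bl') (ex bl)" unfolding bl_def dec(1) by simp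
      then show ?thesis using eqv_Cons[OF bl'(3)] eqv_trans by blast
    qed
    ultimately show ?thesis using bl' by metis
  qed
qed

lemma transport:
  assumes "eqv (map fst bl) v"
  shows "\<exists>bl'. map fst bl' = v \<and> mset bl' = mset bl \<and> eqv (ex bl) (ex bl')"
proof -
  have "sc\<^sup>*\<^sup>* (map fst bl) v" using assms eqv_rt by blast
  then show ?thesis
  proof (induction rule: rtranclp_induct)
    case base then show ?case by (intro exI[of _ bl]) simp
  next
    case (step y z)
    then obtain bl1 where bl1: "map fst bl1 = y" "mset bl1 = mset bl" "eqv (ex bl) (ex bl1)" by blast
    from step(2) obtain u1 a b v1 where yz: "y = u1 @ [a, b] @ v1" "z = u1 @ [b, a] @ v1" "E a b"
      unfolding sc_swap swap_step_def by blast
    obtain U rest where r1: "bl1 = U @ rest" "map fst U = u1" "map fst rest = a # b # v1"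
      using bl1(1) yz(1) by (auto simp: map_eq_append_conv)
    obtain z1 z2 V where r2: "rest = z1 # z2 # V" "fst z1 = a" "fst z2 = b" "map fst V = v1"
      using r1(3) by (auto simp: map_eq_Cons_conv)
    obtain k l where kl: "z1 = (a, k)" "z2 = (b, l)" using r2 by (cases z1, cases z2) auto
    define bl2 where "bl2 = U @ (b, l) # (a, k) # V"
    have "map fst bl2 = z" unfolding bl2_def using r1 r2 yz by simp
    moreover have "mset bl2 = mset bl" unfolding bl2_def using bl1(2) r1 r2 kl by (simp add: add_mset_commute)
    moreover have "eqv (ex bl1) (ex bl2)"
    proof -
      have "\<forall>x\<in>set (replicate k a). E x b" using yz(3) by simp
      then have "eqv (replicate k a @ replicate l b) (replicate l b @ replicate k a)" by (rule commk)
      then have "eqv (ex U @ (replicate k a @ replicate l b) @ ex V) (ex U @ (replicate l b @ replicate k a) @ ex V)"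
        by (rule eqv_wrap)
      then show ?thesis unfolding bl2_def using r1 r2 kl by simp
    qed
    ultimately show ?case using bl1(3) eqv_trans by blast
  qed
qed

end


lemma infsum_ennreal_ge:
  fixes f :: "'a \<Rightarrow> ennreal"
  assumes "finite F" "F \<subseteq> S"
  shows "sum f F \<le> infsum f S"
proof -
  have "infsum f S = (SUP F\<in>{F. finite F \<and> F \<subseteq> S}. sum f F)" by (rule nonneg_infsum_complete) simp
  then show ?thesis using assms by (metis (mono_tags, lifting) SUP_upper mem_Collect_eq)
qed

lemma infsum_ennreal_le:
  fixes f :: "'a \<Rightarrow> ennreal"
  assumes "\<And>F. finite F \<Longrightarrow> F \<subseteq> S \<Longrightarrow> sum f F \<le> B"
  shows "infsum f S \<le> B"
proof -
  have "infsum f S = (SUP F\<in>{F. finite F \<and> F \<subseteq> S}. sum f F)" by (rule nonneg_infsum_complete) simp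
  then show ?thesis using assms by (simp add: SUP_le_iff)
qed

lemma prod_list_nonneg': "(\<forall>a\<in>set r. 0 \<le> (f a::real)) \<Longrightarrow> 0 \<le> prod_list (map f r)"
  by (induction r) auto

lemma prod_list_mono':
  fixes f g :: "'a \<Rightarrow> real"
  shows "(\<forall>a\<in>set r. 0 \<le> f a \<and> f a \<le> g a) \<Longrightarrow> prod_list (map f r) \<le> prod_list (map g r)"
proof (induction r)
  case (Cons a r)
  have "0 \<le> prod_list (map f r)" using Cons.prems by (intro prod_list_nonneg') auto
  then show ?case using Cons by (simp add: mult_mono order_trans)
qed simp

lemma sum_prod_sep: "(\<Sum>k\<in>A. \<Sum>b\<in>B. (f k::real) * g b) = sum f A * sum g B"
  by (simp add: sum_product)

lemma tendsto_prod_list':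
  fixes f :: "nat \<Rightarrow> 'a \<Rightarrow> real"
  shows "(\<forall>a\<in>set r. (\<lambda>M. f M a) \<longlonglongrightarrow> g a) \<Longrightarrow> (\<lambda>M. prod_list (map (f M) r)) \<longlonglongrightarrow> prod_list (map g r)"
  by (induction r) (auto intro!: tendsto_mult)

lemma geo_partial:
  fixes t :: real
  shows "(\<Sum>k\<in>{1..M}. t ^ k) = t * (\<Sum>k<M. t ^ k)"
  by (induction M) (auto simp: sum_distrib_left distrib_left)

lemma geo_lim:
  fixes t :: real
  assumes "0 \<le> t" "t < 1"
  shows "(\<lambda>M. \<Sum>k\<in>{1..M}. t ^ k) \<longlonglongrightarrow> t / (1 - t)"
proof -
  have "(\<lambda>k. t ^ k) sums (1 / (1 - t))" using assms by (intro geometric_sums) simp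
  then have "(\<lambda>M. \<Sum>k<M. t ^ k) \<longlonglongrightarrow> 1 / (1 - t)" by (simp add: sums_def)
  then have "(\<lambda>M. t * (\<Sum>k<M. t ^ k)) \<longlonglongrightarrow> t * (1 / (1 - t))" by (rule tendsto_mult_left)
  then show ?thesis unfolding geo_partial by simp
qed

lemma geo_le:
  fixes t :: real
  assumes "0 \<le> t" "t < 1"
  shows "(\<Sum>k\<in>{1..M}. t ^ k) \<le> t / (1 - t)"
proof -
  have "(\<lambda>k. t ^ k) sums (1 / (1 - t))" using assms by (intro geometric_sums) simp
  then have "(\<Sum>k<M. t ^ k) \<le> 1 / (1 - t)"
    using sum_le_suminf[of "\<lambda>k. t ^ k" "{..<M}"] assms by (simp add: sums_iff)
  then have "t * (\<Sum>k<M. t ^ k) \<le> t * (1 / (1 - t))" using assms by (intro mult_left_mono) auto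
  then show ?thesis unfolding geo_partial by simp
qed

context sg begin

definition RQ :: "'v set \<Rightarrow> 'v list set set" where
  "RQ V = {w \<in> words V. reduced_word E w} // word_equiv E"

definition repR :: "'v list set \<Rightarrow> 'v list" where
  "repR R = (SOME w. w \<in> R \<and> reduced_word E w)"

definition BL :: "'v list \<Rightarrow> nat \<Rightarrow> ('v \<times> nat) list set" where
  "BL r M = {bl. map fst bl = r \<and> (\<forall>p\<in>set bl. 1 \<le> snd p \<and> snd p \<le> M)}"

lemma RQ_iff: "R \<in> RQ V \<longleftrightarrow> (\<exists>w. set w \<subseteq> V \<and> \<not> nr w \<and> R = cls w)"
  unfolding RQ_def quotient_def words_def cls_def red_iff by blast

lemma repR: "R \<in> RQ V \<Longrightarrow> eqv (repR R) (repR R) \<and> \<not> nr (repR R) \<and> cls (repR R) = R \<and> set (repR R) \<subseteq> V"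
proof -
  assume "R \<in> RQ V"
  then obtain w where w: "set w \<subseteq> V" "\<not> nr w" "R = cls w" using RQ_iff by blast
  have ex: "\<exists>u. u \<in> R \<and> reduced_word E u" using w red_iff by (intro exI[of _ w]) simp
  have "repR R \<in> R \<and> reduced_word E (repR R)" unfolding repR_def using someI_ex[OF ex] .
  then have "eqv w (repR R)" "\<not> nr (repR R)" using w red_iff by auto
  then show ?thesis using w cls_eq_iff eqv_set by (metis eqv_refl)
qed

lemma monomial_ennreal: "(\<forall>v\<in>set w. 0 \<le> y v) \<Longrightarrow> monomial (\<lambda>v. ennreal (y v)) w = ennreal (prod_list (map y w))"
proof (induction w)
  case Nil then show ?case by (simp add: monomial_def)
next
  case (Cons a w)
  have "0 \<le> prod_list (map y w)" using Cons.prems by (intro prod_list_nonneg') auto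
  then show ?case using Cons by (simp add: monomial_def ennreal_mult)
qed

lemma prod_ex: "prod_list (map x (ex bl)) = prod_list (map (\<lambda>(a, k). x a ^ k) bl)"
proof (induction bl)
  case (Cons p bl) then show ?case by (cases p) auto
qed simp

lemma BL_sum:
  fixes x :: "'v \<Rightarrow> real"
  shows "finite (BL r M) \<and> (\<Sum>bl\<in>BL r M. prod_list (map (\<lambda>(a, k). x a ^ k) bl)) = prod_list (map (\<lambda>a. \<Sum>k\<in>{1..M}. x a ^ k) r)"
proof (induction r)
  case Nil
  have "BL [] M = {[]}" unfolding BL_def by auto
  then show ?case by simp
next
  case (Cons a r)
  let ?f = "\<lambda>(k, bl). (a, k) # bl"
  have e: "BL (a # r) M = ?f ` ({1..M} \<times> BL r M)"
  proof (rule set_eqI)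
    fix bl show "bl \<in> BL (a # r) M \<longleftrightarrow> bl \<in> ?f ` ({1..M} \<times> BL r M)"
    proof
      assume "bl \<in> BL (a # r) M"
      then obtain z bl' where "bl = z # bl'" "fst z = a" "map fst bl' = r" "1 \<le> snd z" "snd z \<le> M"
        "\<forall>p\<in>set bl'. 1 \<le> snd p \<and> snd p \<le> M" unfolding BL_def by (auto simp: map_eq_Cons_conv)
      then show "bl \<in> ?f ` ({1..M} \<times> BL r M)" unfolding BL_def
        by (intro image_eqI[of _ _ "(snd z, bl')"]) auto
    next
      assume "bl \<in> ?f ` ({1..M} \<times> BL r M)"
      then show "bl \<in> BL (a # r) M" unfolding BL_def by auto
    qed
  qed
  have inj: "inj_on ?f ({1..M} \<times> BL r M)" unfolding inj_on_def by auto
  have fin: "finite ({1..M} \<times> BL r M)" using Cons.IH by simp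
  have "(\<Sum>bl\<in>BL (a # r) M. prod_list (map (\<lambda>(a, k). x a ^ k) bl))
      = (\<Sum>(k, bl)\<in>{1..M} \<times> BL r M. x a ^ k * prod_list (map (\<lambda>(a, k). x a ^ k) bl))"
    unfolding e by (subst sum.reindex[OF inj]) (auto intro!: sum.cong)
  also have "\<dots> = (\<Sum>k\<in>{1..M}. \<Sum>bl\<in>BL r M. x a ^ k * prod_list (map (\<lambda>(a, k). x a ^ k) bl))"
    by (rule sum.cartesian_product[symmetric])
  also have "\<dots> = (\<Sum>k\<in>{1..M}. x a ^ k) * (\<Sum>bl\<in>BL r M. prod_list (map (\<lambda>(a, k). x a ^ k) bl))"
    by (rule sum_prod_sep)
  finally show ?case using Cons.IH e fin by simp
qed

lemma Phi_inj: "inj_on (\<lambda>(R, bl). cls (ex bl)) (SIGMA R:RQ V. BL (repR R) M)"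
proof (rule inj_onI)
  fix s1 s2 assume s1: "s1 \<in> (SIGMA R:RQ V. BL (repR R) M)" and s2: "s2 \<in> (SIGMA R:RQ V. BL (repR R) M)"
    and eq: "(\<lambda>(R, bl). cls (ex bl)) s1 = (\<lambda>(R, bl). cls (ex bl)) s2"
  obtain R1 bl1 where 1: "s1 = (R1, bl1)" "R1 \<in> RQ V" "bl1 \<in> BL (repR R1) M" using s1 by blast
  obtain R2 bl2 where 2: "s2 = (R2, bl2)" "R2 \<in> RQ V" "bl2 \<in> BL (repR R2) M" using s2 by blast
  have p: "pos bl1" "pos bl2" "map fst bl1 = repR R1" "map fst bl2 = repR R2"
    using 1 2 unfolding BL_def pos_def by auto
  have n: "\<not> nr (map fst bl1)" "\<not> nr (map fst bl2)" using p repR 1 2 by auto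
  have "eqv (ex bl1) (ex bl2)" using eq 1 2 cls_eq_iff by simp
  then have i: "eqv (map fst bl1) (map fst bl2)" "\<forall>b. filt b bl1 = filt b bl2"
    using inj_blocks[OF p(1,2) n] by auto
  have "R1 = R2" using i(1) p repR[OF 1(2)] repR[OF 2(2)] cls_eq_iff by metis
  then have "bl1 = bl2" using filt_eq i(2) p by metis
  then show "s1 = s2" using 1 2 \<open>R1 = R2\<close> by simp
qed

lemma Phi_Q: "R \<in> RQ V \<Longrightarrow> bl \<in> BL (repR R) M \<Longrightarrow> cls (ex bl) \<in> Q V"
proof -
  assume R: "R \<in> RQ V" and bl: "bl \<in> BL (repR R) M"
  have m: "map fst bl = repR R" using bl unfolding BL_def by simp
  have "set (ex bl) \<subseteq> set (map fst bl)" by (rule set_ex_sub)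
  also have "\<dots> = set (repR R)" using m by simp
  also have "\<dots> \<subseteq> V" using repR[OF R] by blast
  finally show ?thesis unfolding Q_iff by blast
qed

lemma Phi_surj: "C \<in> Q V \<Longrightarrow> \<exists>M R bl. R \<in> RQ V \<and> bl \<in> BL (repR R) M \<and> C = cls (ex bl)"
proof -
  assume "C \<in> Q V"
  then obtain w where w: "set w \<subseteq> V" "C = cls w" using Q_iff by blast
  obtain bl where bl: "pos bl" "\<not> nr (map fst bl)" "eqv w (ex bl)" using surj_blocks by blast
  have "set (map fst bl) \<subseteq> V" using set_ex[OF bl(1)] eqv_set[OF bl(3)] w by auto
  then have R: "cls (map fst bl) \<in> RQ V" using bl RQ_iff by blast
  define r0 where "r0 = repR (cls (map fst bl))"
  have "cls r0 = cls (map fst bl)" using repR[OF R] unfolding r0_def by blast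
  then have "eqv (map fst bl) r0" using cls_eq_iff eqv_sym by blast
  then obtain bl0 where bl0: "map fst bl0 = r0" "mset bl0 = mset bl" "eqv (ex bl) (ex bl0)"
    using transport by blast
  define M where "M = Max (insert 0 (snd ` set bl))"
  have "set bl0 = set bl" using bl0(2) by (metis set_mset_mset)
  then have "bl0 \<in> BL r0 M" using bl0(1) bl(1) unfolding BL_def pos_def M_def by auto
  moreover have "C = cls (ex bl0)" using w bl(3) bl0(3) eqv_trans cls_eq_iff by blast
  ultimately show ?thesis using R unfolding r0_def by blast
qed

lemma BL_mono: "M \<le> M' \<Longrightarrow> BL r M \<subseteq> BL r M'"
  unfolding BL_def by auto

lemma Phi_sum:
  fixes x :: "'v \<Rightarrow> real"
  assumes G: "finite G"
  shows "(\<Sum>s\<in>(SIGMA R:G. BL (repR R) M). mono x ((\<lambda>(R, bl). cls (ex bl)) s))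
       = (\<Sum>R\<in>G. prod_list (map (\<lambda>a. \<Sum>k\<in>{1..M}. x a ^ k) (repR R)))"
proof -
  have "(\<Sum>s\<in>(SIGMA R:G. BL (repR R) M). mono x ((\<lambda>(R, bl). cls (ex bl)) s))
      = (\<Sum>(R, bl)\<in>(SIGMA R:G. BL (repR R) M). mono x (cls (ex bl)))"
    by (rule sum.cong) auto
  also have "\<dots> = (\<Sum>R\<in>G. \<Sum>bl\<in>BL (repR R) M. mono x (cls (ex bl)))"
    by (rule sum.Sigma[symmetric]) (use G BL_sum in auto)
  also have "\<dots> = (\<Sum>R\<in>G. \<Sum>bl\<in>BL (repR R) M. prod_list (map (\<lambda>(a, k). x a ^ k) bl))"
    by (simp add: prod_ex)
  also have "\<dots> = (\<Sum>R\<in>G. prod_list (map (\<lambda>a. \<Sum>k\<in>{1..M}. x a ^ k) (repR R)))"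
    using BL_sum by simp
  finally show ?thesis .
qed

lemma ftilde_eq_f:
  fixes x :: "'v \<Rightarrow> real"
  assumes x: "\<forall>v\<in>V. 0 \<le> x v \<and> x v < 1"
  shows "ftilde_series V E (\<lambda>v. ennreal (x v)) = f_series V E (\<lambda>v. ennreal (x v / (1 - x v)))"
proof -
  define Xf where "Xf v = x v / (1 - x v)" for v
  define Phi where "Phi = (\<lambda>(R::'v list set, bl). cls (ex bl))"
  define gs where "gs M a = (\<Sum>k\<in>{1..M}. x a ^ k)" for M a
  have Xf0: "\<forall>v\<in>V. 0 \<le> Xf v" using x unfolding Xf_def by auto
  have x0: "\<forall>v\<in>V. 0 \<le> x v" using x by auto
  have ft: "ftilde_series V E (\<lambda>v. ennreal (x v)) = infsum (\<lambda>C. ennreal (mono x C)) (Q V)"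
    unfolding ftilde_series_def Q_def[symmetric] rep_def[symmetric]
  proof (rule infsum_cong)
    fix C assume "C \<in> Q V"
    then have "set (rep C) \<subseteq> V" using Q_rep by blast
    then show "monomial (\<lambda>v. ennreal (x v)) (rep C) = ennreal (mono x C)"
      unfolding mono_def using x0 by (intro monomial_ennreal) auto
  qed
  have ff: "f_series V E (\<lambda>v. ennreal (x v / (1 - x v))) = infsum (\<lambda>R. ennreal (prod_list (map Xf (repR R)))) (RQ V)"
    unfolding f_series_def RQ_def[symmetric] repR_def[symmetric] Xf_def[symmetric]
  proof (rule infsum_cong)
    fix R assume "R \<in> RQ V"
    then have "set (repR R) \<subseteq> V" using repR by blast
    then show "monomial (\<lambda>v. ennreal (Xf v)) (repR R) = ennreal (prod_list (map Xf (repR R)))"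
      using Xf0 by (intro monomial_ennreal) auto
  qed
  have gsle: "gs M a \<le> Xf a" if "a \<in> V" for M a
    unfolding gs_def Xf_def by (rule geo_le) (use x that in auto)
  have gslim: "(\<lambda>M. gs M a) \<longlonglongrightarrow> Xf a" if "a \<in> V" for a
    unfolding gs_def Xf_def by (rule geo_lim) (use x that in auto)
  have gs0: "0 \<le> gs M a" if "a \<in> V" for M a unfolding gs_def using that x0 by (auto intro!: sum_nonneg)
  have Phi_eq: "(\<Sum>s\<in>(SIGMA R:G. BL (repR R) M). mono x (Phi s)) = (\<Sum>R\<in>G. prod_list (map (gs M) (repR R)))"
    if "finite G" for G M unfolding Phi_def gs_def by (rule Phi_sum[OF that])
  have PhiQ: "Phi s \<in> Q V" if "s \<in> (SIGMA R:RQ V. BL (repR R) M)" for s M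
    using that Phi_Q unfolding Phi_def by auto
  have Phi_inj': "inj_on Phi (SIGMA R:RQ V. BL (repR R) M)" for M unfolding Phi_def by (rule Phi_inj)
  have mono0: "0 \<le> mono x C" if "C \<in> Q V" for C using mono_nonneg[OF that] x0 by blast
  show ?thesis
  proof (rule antisym)
    show "ftilde_series V E (\<lambda>v. ennreal (x v)) \<le> f_series V E (\<lambda>v. ennreal (x v / (1 - x v)))"
      unfolding ft
    proof (rule infsum_ennreal_le)
      fix F assume F: "finite F" "F \<subseteq> Q V"
      have "\<forall>C\<in>F. \<exists>M. \<exists>R bl. R \<in> RQ V \<and> bl \<in> BL (repR R) M \<and> C = cls (ex bl)"
        using F Phi_surj by blast
      then obtain Mf where Mf: "\<forall>C\<in>F. \<exists>R bl. R \<in> RQ V \<and> bl \<in> BL (repR R) (Mf C) \<and> C = cls (ex bl)"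
        by metis
      define M where "M = Max (insert 0 (Mf ` F))"
      have MfM: "Mf C \<le> M" if "C \<in> F" for C unfolding M_def using F(1) that by simp
      have FP: "F \<subseteq> Phi ` (SIGMA R:RQ V. BL (repR R) M)"
      proof
        fix C assume C: "C \<in> F"
        then obtain R bl where "R \<in> RQ V" "bl \<in> BL (repR R) (Mf C)" "C = cls (ex bl)" using Mf by blast
        moreover then have "bl \<in> BL (repR R) M" using BL_mono[OF MfM[OF C]] by blast
        ultimately show "C \<in> Phi ` (SIGMA R:RQ V. BL (repR R) M)" unfolding Phi_def by force
      qed
      define T where "T = Phi -` F \<inter> (SIGMA R:RQ V. BL (repR R) M)"
      have finT: "finite T" unfolding T_def by (rule finite_vimage_IntI[OF F(1) Phi_inj'])
      have FT: "F = Phi ` T" unfolding T_def using FP by blast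
      have injT: "inj_on Phi T" using Phi_inj' unfolding T_def by (rule inj_on_subset) blast
      define G where "G = fst ` T"
      have finG: "finite G" unfolding G_def using finT by simp
      have GRQ: "G \<subseteq> RQ V" unfolding G_def T_def by auto
      have TS: "T \<subseteq> (SIGMA R:G. BL (repR R) M)" unfolding G_def T_def by force
      have finS: "finite (SIGMA R:G. BL (repR R) M)" using finG BL_sum by auto
      have "(\<Sum>C\<in>F. mono x C) = (\<Sum>s\<in>T. mono x (Phi s))" unfolding FT by (rule sum.reindex[OF injT, unfolded comp_def])
      also have "\<dots> \<le> (\<Sum>s\<in>(SIGMA R:G. BL (repR R) M). mono x (Phi s))"
      proof (rule sum_mono2[OF finS TS])
        fix s assume "s \<in> (SIGMA R:G. BL (repR R) M) - T"
        then have "s \<in> (SIGMA R:RQ V. BL (repR R) M)" using GRQ by blast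
        then show "0 \<le> mono x (Phi s)" using PhiQ mono0 by blast
      qed
      also have "\<dots> = (\<Sum>R\<in>G. prod_list (map (gs M) (repR R)))" by (rule Phi_eq[OF finG])
      also have "\<dots> \<le> (\<Sum>R\<in>G. prod_list (map Xf (repR R)))"
      proof (rule sum_mono)
        fix R assume "R \<in> G"
        then have "set (repR R) \<subseteq> V" using GRQ repR by blast
        then show "prod_list (map (gs M) (repR R)) \<le> prod_list (map Xf (repR R))"
          using gs0 gsle by (intro prod_list_mono') auto
      qed
      finally have le: "(\<Sum>C\<in>F. mono x C) \<le> (\<Sum>R\<in>G. prod_list (map Xf (repR R)))" .
      have "(\<Sum>C\<in>F. ennreal (mono x C)) = ennreal (\<Sum>C\<in>F. mono x C)"
        using F mono0 by (intro sum_ennreal) auto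
      also have "\<dots> \<le> ennreal (\<Sum>R\<in>G. prod_list (map Xf (repR R)))" using le by (rule ennreal_leI)
      also have "\<dots> = (\<Sum>R\<in>G. ennreal (prod_list (map Xf (repR R))))"
      proof (rule sum_ennreal[symmetric])
        fix R assume "R \<in> G"
        then have "set (repR R) \<subseteq> V" using GRQ repR by blast
        then show "0 \<le> prod_list (map Xf (repR R))" using Xf0 by (intro prod_list_nonneg') auto
      qed
      also have "\<dots> \<le> f_series V E (\<lambda>v. ennreal (x v / (1 - x v)))"
        unfolding ff by (rule infsum_ennreal_ge[OF finG GRQ])
      finally show "(\<Sum>C\<in>F. ennreal (mono x C)) \<le> f_series V E (\<lambda>v. ennreal (x v / (1 - x v)))" .
    qed
  next
    show "f_series V E (\<lambda>v. ennreal (x v / (1 - x v))) \<le> ftilde_series V E (\<lambda>v. ennreal (x v))"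
      unfolding ff
    proof (rule infsum_ennreal_le)
      fix G assume G: "finite G" "G \<subseteq> RQ V"
      have pn: "0 \<le> prod_list (map Xf (repR R))" if "R \<in> G" for R
      proof -
        have "set (repR R) \<subseteq> V" using that G repR by blast
        then show ?thesis using Xf0 by (intro prod_list_nonneg') auto
      qed
      define L where "L = (\<Sum>R\<in>G. prod_list (map Xf (repR R)))"
      define u where "u M = (\<Sum>R\<in>G. prod_list (map (gs M) (repR R)))" for M
      have lim: "u \<longlonglongrightarrow> L" unfolding u_def L_def
      proof (intro tendsto_sum tendsto_prod_list')
        fix R assume "R \<in> G"
        then have "set (repR R) \<subseteq> V" using G repR by blast
        then show "\<forall>a\<in>set (repR R). (\<lambda>M. gs M a) \<longlonglongrightarrow> Xf a"
          using gslim by auto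
      qed
      have bnd: "ennreal (u M) \<le> infsum (\<lambda>C. ennreal (mono x C)) (Q V)" for M
      proof -
        let ?S = "SIGMA R:G. BL (repR R) M"
        have finS: "finite ?S" using G BL_sum by auto
        have SS: "?S \<subseteq> (SIGMA R:RQ V. BL (repR R) M)" using G by blast
        have inj: "inj_on Phi ?S" using Phi_inj' SS by (rule inj_on_subset)
        have sub: "Phi ` ?S \<subseteq> Q V" using PhiQ SS by blast
        have "u M = (\<Sum>s\<in>?S. mono x (Phi s))" unfolding u_def using Phi_eq[OF G(1)] by simp
        also have "\<dots> = (\<Sum>C\<in>Phi ` ?S. mono x C)" by (rule sum.reindex[OF inj, unfolded comp_def, symmetric])
        finally have "ennreal (u M) = ennreal (\<Sum>C\<in>Phi ` ?S. mono x C)" by simp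
        also have "\<dots> = (\<Sum>C\<in>Phi ` ?S. ennreal (mono x C))"
          using sub mono0 by (intro sum_ennreal[symmetric]) auto
        also have "\<dots> \<le> infsum (\<lambda>C. ennreal (mono x C)) (Q V)"
          by (rule infsum_ennreal_ge) (use finS sub in auto)
        finally show ?thesis .
      qed
      have "ennreal L \<le> infsum (\<lambda>C. ennreal (mono x C)) (Q V)"
        by (rule LIMSEQ_le_const2[of "\<lambda>M. ennreal (u M)"]) (use lim bnd in auto)
      moreover have "(\<Sum>R\<in>G. ennreal (prod_list (map Xf (repR R)))) = ennreal L"
        unfolding L_def using pn by (rule sum_ennreal)
      ultimately show "(\<Sum>R\<in>G. ennreal (prod_list (map Xf (repR R)))) \<le> ftilde_series V E (\<lambda>v. ennreal (x v))"
        unfolding ft by simp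
    qed
  qed
qed

end


context sg begin

lemma ft_eq: "(\<forall>v\<in>W. 0 \<le> y v) \<Longrightarrow> ftilde_series W E (\<lambda>v. ennreal (y v)) = infsum (\<lambda>C. ennreal (mono y C)) (Q W)"
  unfolding ftilde_series_def Q_def[symmetric] rep_def[symmetric]
proof (rule infsum_cong)
  fix C assume y: "\<forall>v\<in>W. 0 \<le> y v" and "C \<in> Q W"
  then have "set (rep C) \<subseteq> W" using Q_rep by blast
  then show "monomial (\<lambda>v. ennreal (y v)) (rep C) = ennreal (mono y C)"
    unfolding mono_def using y by (intro monomial_ennreal) auto
qed

lemma partial_A:
  assumes W: "finite W"
  shows "(\<Sum>n\<le>M. A W y n) = (\<Sum>C\<in>(\<Union>n\<le>M. Qn W n). mono y C)"
  unfolding A_def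
proof (rule sum.UNION_disjoint[symmetric])
  show "\<forall>i\<in>{..M}. \<forall>j\<in>{..M}. i \<noteq> j \<longrightarrow> Qn W i \<inter> Qn W j = {}" unfolding Qn_def by auto
qed (use finite_Qn[OF W] in auto)

lemma Qn_sub: "(\<Union>n\<le>M. Qn W n) \<subseteq> Q W"
  unfolding Qn_def by auto

lemma bridge1:
  assumes W: "finite W" and y: "\<forall>v\<in>W. 0 \<le> y v" and t: "ftilde_series W E (\<lambda>v. ennreal (y v)) < top"
  shows "summable (A W y)"
proof -
  obtain r where r: "r \<ge> 0" "ftilde_series W E (\<lambda>v. ennreal (y v)) = ennreal r" using t less_top_ennreal by blast
  have m0: "0 \<le> mono y C" if "C \<in> Q W" for C using mono_nonneg[OF that] y by blast
  have "(\<Sum>n\<le>M. A W y n) \<le> r" for M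
  proof -
    have fin: "finite (\<Union>n\<le>M. Qn W n)" using finite_Qn[OF W] by auto
    have "ennreal (\<Sum>n\<le>M. A W y n) = ennreal (\<Sum>C\<in>(\<Union>n\<le>M. Qn W n). mono y C)" by (simp add: partial_A[OF W])
    also have "\<dots> = (\<Sum>C\<in>(\<Union>n\<le>M. Qn W n). ennreal (mono y C))"
      using Qn_sub m0 by (intro sum_ennreal[symmetric]) blast
    also have "\<dots> \<le> infsum (\<lambda>C. ennreal (mono y C)) (Q W)" by (rule infsum_ennreal_ge[OF fin Qn_sub])
    also have "\<dots> = ennreal r" using r ft_eq[OF y] by simp
    finally show ?thesis using r(1) by simp
  qed
  then show ?thesis by (intro bounded_imp_summable[OF A_nonneg[OF y]])
qed

lemma bridge2:
  assumes W: "finite W" and y: "\<forall>v\<in>W. 0 \<le> y v" and s: "summable (A W y)"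
  shows "ftilde_series W E (\<lambda>v. ennreal (y v)) < top"
proof -
  have m0: "0 \<le> mono y C" if "C \<in> Q W" for C using mono_nonneg[OF that] y by blast
  have "infsum (\<lambda>C. ennreal (mono y C)) (Q W) \<le> ennreal (suminf (A W y))"
  proof (rule infsum_ennreal_le)
    fix F assume F: "finite F" "F \<subseteq> Q W"
    define M where "M = Max (insert 0 (len ` F))"
    have FU: "F \<subseteq> (\<Union>n\<le>M. Qn W n)"
    proof
      fix C assume "C \<in> F"
      then have "len C \<le> M" "C \<in> Q W" unfolding M_def using F by auto
      then show "C \<in> (\<Union>n\<le>M. Qn W n)" unfolding Qn_def by auto
    qed
    have fin: "finite (\<Union>n\<le>M. Qn W n)" using finite_Qn[OF W] by auto
    have "(\<Sum>C\<in>F. ennreal (mono y C)) \<le> (\<Sum>C\<in>(\<Union>n\<le>M. Qn W n). ennreal (mono y C))"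
      by (rule sum_mono2[OF fin FU]) simp
    also have "\<dots> = ennreal (\<Sum>C\<in>(\<Union>n\<le>M. Qn W n). mono y C)"
      using Qn_sub m0 by (intro sum_ennreal) blast
    also have "\<dots> = ennreal (\<Sum>n\<le>M. A W y n)" by (simp add: partial_A[OF W])
    also have "\<dots> \<le> ennreal (suminf (A W y))"
      using sum_le_suminf[OF s, of "{..M}"] A_nonneg[OF y] by (intro ennreal_leI) auto
    finally show "(\<Sum>C\<in>F. ennreal (mono y C)) \<le> ennreal (suminf (A W y))" .
  qed
  then show ?thesis using ft_eq[OF y] by (simp add: le_less_trans)
qed

lemma cp_restrict:
  assumes V: "finite V" and U: "U \<subseteq> V" and y: "\<forall>v\<in>V - U. y v = 0"
  shows "clique_poly V E y = clique_poly U E y"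
  unfolding clique_poly_def
proof (rule sum.mono_neutral_right)
  show "finite {K. K \<subseteq> V \<and> is_clique E K}" using V by simp
  show "{K. K \<subseteq> U \<and> is_clique E K} \<subseteq> {K. K \<subseteq> V \<and> is_clique E K}" using U by auto
  show "\<forall>K\<in>{K. K \<subseteq> V \<and> is_clique E K} - {K. K \<subseteq> U \<and> is_clique E K}. (-1) ^ card K * prod y K = 0"
  proof
    fix K assume K: "K \<in> {K. K \<subseteq> V \<and> is_clique E K} - {K. K \<subseteq> U \<and> is_clique E K}"
    then obtain v where "v \<in> K" "v \<in> V - U" by blast
    moreover have "finite K" using K V finite_subset by blast
    ultimately have "prod y K = 0" using y by (meson prod_zero_iff)
    then show "(-1) ^ card K * prod y K = 0" by simp
  qed
qed

lemma cp_cong: "(\<forall>v\<in>U. y v = y' v) \<Longrightarrow> clique_poly U E y = clique_poly U E y'"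
  unfolding clique_poly_def by (intro sum.cong refl arg_cong2[where f = "(*)"] prod.cong) auto

lemma cp_empty: "clique_poly {} E y = 1"
proof -
  have "{K. K \<subseteq> {} \<and> is_clique E K} = {{}}" by (auto simp: is_clique_def)
  then show ?thesis unfolding clique_poly_def by simp
qed

lemma cp_single: "finite V \<Longrightarrow> v \<in> V \<Longrightarrow> clique_poly V E (\<lambda>u. if u = v then t else 0) = 1 - t"
proof -
  assume V: "finite V" "v \<in> V"
  have "clique_poly V E (\<lambda>u. if u = v then t else 0) = clique_poly {v} E (\<lambda>u. if u = v then t else 0)"
    by (rule cp_restrict) (use V in auto)
  also have "\<dots> = clique_poly ({v} - {v}) E (\<lambda>u. if u = v then t else 0) - t * clique_poly {u\<in>{v}. E v u} E (\<lambda>u. if u = v then t else 0)"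
    using clique_poly_split[of "{v}" v] by simp
  also have "{u\<in>{v}. E v u} = {}" using irrE by auto
  finally show ?thesis by (simp add: cp_empty)
qed

lemma P_iff:
  assumes V: "finite V"
  shows "(\<forall>y. (\<forall>v\<in>V. y v = 0 \<or> y v = z v) \<longrightarrow> clique_poly V E y > 0) \<longleftrightarrow> (\<forall>U\<subseteq>V. clique_poly U E z > 0)"
proof
  assume a: "\<forall>y. (\<forall>v\<in>V. y v = 0 \<or> y v = z v) \<longrightarrow> clique_poly V E y > 0"
  show "\<forall>U\<subseteq>V. clique_poly U E z > 0"
  proof (intro allI impI)
    fix U assume U: "U \<subseteq> V"
    define y where "y v = (if v \<in> U then z v else 0)" for v
    have "clique_poly V E y > 0" using a unfolding y_def by auto
    also have "clique_poly V E y = clique_poly U E y" using V U by (intro cp_restrict) (auto simp: y_def)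
    also have "\<dots> = clique_poly U E z" by (intro cp_cong) (auto simp: y_def)
    finally show "clique_poly U E z > 0" .
  qed
next
  assume a: "\<forall>U\<subseteq>V. clique_poly U E z > 0"
  show "\<forall>y. (\<forall>v\<in>V. y v = 0 \<or> y v = z v) \<longrightarrow> clique_poly V E y > 0"
  proof (intro allI impI)
    fix y assume y: "\<forall>v\<in>V. y v = 0 \<or> y v = z v"
    define U where "U = {v\<in>V. y v \<noteq> 0}"
    have "clique_poly V E y = clique_poly U E y" using V by (intro cp_restrict) (auto simp: U_def)
    also have "\<dots> = clique_poly U E z" using y by (intro cp_cong) (auto simp: U_def)
    also have "\<dots> > 0" using a U_def by auto
    finally show "clique_poly V E y > 0" .
  qed
qed

lemma A_mono: "(\<forall>v\<in>W. 0 \<le> y v \<and> y v \<le> z v) \<Longrightarrow> A W y n \<le> A W z n"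
  unfolding A_def
proof (rule sum_mono)
  fix C assume yz: "\<forall>v\<in>W. 0 \<le> y v \<and> y v \<le> z v" and "C \<in> Qn W n"
  then have "set (rep C) \<subseteq> W" using Q_rep unfolding Qn_def by blast
  then show "mono y C \<le> mono z C" unfolding mono_def using yz by (intro prod_list_mono') auto
qed

lemma A_sub:
  assumes V: "finite V" and U: "U \<subseteq> V" and y: "\<forall>v\<in>V. 0 \<le> y v"
  shows "A U y n \<le> A V y n"
proof -
  have sub: "Qn U n \<subseteq> Qn V n"
  proof
    fix C assume "C \<in> Qn U n"
    then obtain w where "set w \<subseteq> U" "length w = n" "C = cls w" unfolding Qn_iff by blast
    then show "C \<in> Qn V n" unfolding Qn_iff using U by blast
  qed
  have "sum (mono y) (Qn U n) \<le> sum (mono y) (Qn V n)"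
  proof (rule sum_mono2[OF finite_Qn[OF V] sub])
    fix b assume "b \<in> Qn V n - Qn U n"
    then have "b \<in> Q V" unfolding Qn_def by blast
    then show "0 \<le> mono y b" using mono_nonneg y by blast
  qed
  then show ?thesis unfolding A_def .
qed

lemma c2_c4:
  assumes V: "finite V" and x: "\<forall>v\<in>V. 0 \<le> x v" and s: "summable (A V x)"
    and y: "\<forall>v\<in>V. 0 \<le> y v \<and> y v \<le> x v"
  shows "clique_poly V E y > 0"
proof -
  have sy: "summable (A V y)"
    by (rule summable_comparison_test'[OF s, of 0]) (use A_nonneg A_mono y in auto)
  have "clique_poly V E y * suminf (A V y) = 1" by (rule K_times_sum[OF V sy])
  moreover have "0 \<le> suminf (A V y)" using suminf_nonneg[OF sy] A_nonneg y by auto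
  ultimately show ?thesis by (metis less_eq_real_def mult_nonpos_nonneg not_less zero_less_one)
qed

lemma P_cmp:
  assumes V: "finite V" and z: "\<forall>v\<in>V. 0 \<le> z v" and P: "\<forall>U\<subseteq>V. clique_poly U E z > 0" and U: "U \<subseteq> V"
  shows "clique_poly V E z \<le> clique_poly U E z"
proof -
  have fU: "finite U" using V U finite_subset by blast
  have zU: "\<forall>v\<in>U. 0 \<le> z v" using z U by auto
  have sV: "summable (A V z)" using summ_main[OF V z] P by auto
  have sU: "summable (A U z)" using summ_main[OF fU zU] P U by auto
  have kV: "clique_poly V E z * suminf (A V z) = 1" by (rule K_times_sum[OF V sV])
  have kU: "clique_poly U E z * suminf (A U z) = 1" by (rule K_times_sum[OF fU sU])
  have le: "suminf (A U z) \<le> suminf (A V z)" by (rule suminf_le[OF _ sU sV]) (use A_sub V U z in auto)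
  have p: "clique_poly U E z > 0" "clique_poly V E z > 0" using P U by auto
  have sU0': "0 \<le> suminf (A U z)" using suminf_nonneg[OF sU] A_nonneg zU by auto
  have sU0: "suminf (A U z) > 0" using sU0' kU by (metis less_eq_real_def mult_zero_right zero_neq_one)
  have "clique_poly V E z * suminf (A U z) \<le> clique_poly V E z * suminf (A V z)"
    using le p by (intro mult_left_mono) auto
  then have "clique_poly V E z * suminf (A U z) \<le> clique_poly U E z * suminf (A U z)" using kU kV by simp
  then show ?thesis using sU0 by (rule mult_right_le_imp_le)
qed

end

context sg begin

lemma cp_zero: "finite U \<Longrightarrow> clique_poly U E (\<lambda>v. 0 * x v) = 1"
proof -
  assume U: "finite U"
  have "clique_poly U E (\<lambda>v. 0 * x v) = clique_poly {} E (\<lambda>v. 0 * x v)" by (rule cp_restrict) (use U in auto)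
  then show ?thesis by (simp add: cp_empty)
qed

lemma c5_c3:
  assumes V: "finite V" and x: "\<forall>v\<in>V. 0 \<le> x v"
    and c5: "\<forall>\<alpha>::real. 0 \<le> \<alpha> \<and> \<alpha> \<le> 1 \<longrightarrow> clique_poly V E (\<lambda>v. \<alpha> * x v) > 0"
  shows "\<forall>U\<subseteq>V. clique_poly U E x > 0"
proof (rule ccontr)
  assume neg: "\<not> (\<forall>U\<subseteq>V. clique_poly U E x > 0)"
  define phi where "phi U \<alpha> = clique_poly U E (\<lambda>v. \<alpha> * x v)" for U \<alpha>
  define S where "S = {\<alpha>::real. 0 \<le> \<alpha> \<and> \<alpha> \<le> 1 \<and> (\<exists>U\<in>Pow V. phi U \<alpha> \<le> 0)}"
  have "1 \<in> S" using neg unfolding S_def phi_def by (auto simp: not_less)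
  then have Sne: "S \<noteq> {}" by blast
  have cont: "continuous_on UNIV (phi U)" for U
    unfolding phi_def clique_poly_def by (intro continuous_intros)
  have Seq: "S = {0..1} \<inter> (\<Union>U\<in>Pow V. {\<alpha>. phi U \<alpha> \<le> 0})" unfolding S_def by auto
  have cl: "closed {\<alpha>. phi U \<alpha> \<le> 0}" for U
    using closed_Collect_le[OF cont continuous_on_const, of U 0] by simp
  have "closed S" unfolding Seq
    by (intro closed_Int closed_atLeastAtMost closed_UN) (use V cl in auto)
  moreover have bdd: "bdd_below S" unfolding S_def bdd_below_def by auto
  ultimately have "Inf S \<in> S" using Sne closed_contains_Inf by blast
  define a1 where "a1 = Inf S"
  obtain U0 where U0: "U0 \<subseteq> V" "phi U0 a1 \<le> 0" and a1: "0 \<le> a1" "a1 \<le> 1"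
    using \<open>Inf S \<in> S\<close> unfolding a1_def S_def by auto
  have "a1 \<noteq> 0"
  proof
    assume "a1 = 0"
    then have "phi U0 a1 = 1" unfolding phi_def using cp_zero V U0(1) finite_subset by metis
    then show False using U0 by simp
  qed
  then have a1pos: "0 < a1" using a1 by simp
  have below: "phi V \<alpha> \<le> phi U0 \<alpha>" if "0 < \<alpha>" "\<alpha> < a1" for \<alpha>
  proof -
    have "\<alpha> \<notin> S" using that cInf_lower[OF _ bdd, of \<alpha>] unfolding a1_def by force
    then have P: "\<forall>U\<subseteq>V. clique_poly U E (\<lambda>v. \<alpha> * x v) > 0"
      using that a1 unfolding S_def phi_def by (auto simp: not_le)
    have z: "\<forall>v\<in>V. 0 \<le> \<alpha> * x v" using x that by simp
    show ?thesis unfolding phi_def by (rule P_cmp[OF V z P U0(1)])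
  qed
  have t: "(phi U \<longlongrightarrow> phi U a1) (at_left a1)" for U
    unfolding phi_def clique_poly_def by (intro tendsto_intros)
  have ev: "eventually (\<lambda>\<alpha>. phi V \<alpha> \<le> phi U0 \<alpha>) (at_left a1)"
    using eventually_at_left_real[OF a1pos] by eventually_elim (use below in auto)
  have "phi V a1 \<le> phi U0 a1" by (rule tendsto_le[OF _ t t ev]) simp
  moreover have "phi V a1 > 0" using c5 a1 unfolding phi_def by auto
  ultimately show False using U0 by simp
qed

end

theorem lemma4p1:
  fixes V :: "'v set" and E :: "'v \<Rightarrow> 'v \<Rightarrow> bool" and x :: "'v \<Rightarrow> real"
  assumes "simple_graph V E"
    and "\<forall>v\<in>V. 0 \<le> x v \<and> x v \<le> 1"
  defines "c1 \<equiv> (\<forall>v\<in>V. x v < 1) \<and>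
              f_series V E (\<lambda>v. ennreal (x v / (1 - x v))) < top"
    and "c2 \<equiv> ftilde_series V E (\<lambda>v. ennreal (x v)) < top"
    and "c3 \<equiv> (\<forall>y. (\<forall>v\<in>V. y v = 0 \<or> y v = x v) \<longrightarrow> clique_poly V E y > 0)"
    and "c4 \<equiv> (\<forall>y. (\<forall>v\<in>V. 0 \<le> y v \<and> y v \<le> x v) \<longrightarrow> clique_poly V E y > 0)"
    and "c5 \<equiv> (\<forall>\<alpha>::real. 0 \<le> \<alpha> \<and> \<alpha> \<le> 1 \<longrightarrow> clique_poly V E (\<lambda>v. \<alpha> * x v) > 0)"
  shows "(c1 \<longleftrightarrow> c2) \<and> (c2 \<longleftrightarrow> c3) \<and> (c3 \<longleftrightarrow> c4) \<and> (c4 \<longleftrightarrow> c5)"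
proof -
  have V: "finite V" and symE: "\<And>a b. E a b \<Longrightarrow> E b a" and irrE: "\<And>a. \<not> E a a"
    using assms(1) unfolding simple_graph_def by auto
  interpret sg E by standard (use symE irrE in auto)
  have x0: "\<forall>v\<in>V. 0 \<le> x v" using assms(2) by auto
  have c2s: "c2 \<longleftrightarrow> summable (A V x)" unfolding c2_def using bridge1[OF V x0] bridge2[OF V x0] by blast
  have c3P: "c3 \<longleftrightarrow> (\<forall>U\<subseteq>V. clique_poly U E x > 0)" unfolding c3_def by (rule P_iff[OF V])
  have c24: "c2 \<Longrightarrow> c4" unfolding c4_def using c2s c2_c4[OF V x0] by blast
  have c43: "c4 \<Longrightarrow> c3" unfolding c4_def c3_def using x0 by (metis order_refl)
  have c32: "c3 \<Longrightarrow> c2" using c3P c2s summ_main[OF V x0] by blast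
  have c45: "c4 \<Longrightarrow> c5" unfolding c4_def c5_def
  proof (intro allI impI)
    fix \<alpha> :: real assume h: "\<forall>y. (\<forall>v\<in>V. 0 \<le> y v \<and> y v \<le> x v) \<longrightarrow> clique_poly V E y > 0" "0 \<le> \<alpha> \<and> \<alpha> \<le> 1"
    have "\<forall>v\<in>V. 0 \<le> \<alpha> * x v \<and> \<alpha> * x v \<le> x v" using h(2) x0 by (auto simp: mult_left_le_one_le)
    then show "clique_poly V E (\<lambda>v. \<alpha> * x v) > 0" using spec[OF h(1), of "\<lambda>v. \<alpha> * x v"] by (rule mp[rotated])
  qed
  have c53: "c5 \<Longrightarrow> c3" using c3P c5_c3[OF V x0] unfolding c5_def by blast
  have c4lt: "c4 \<Longrightarrow> \<forall>v\<in>V. x v < 1"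
  proof
    fix v assume c4 and v: "v \<in> V"
    define y where "y u = (if u = v then x v else 0)" for u
    have "\<forall>u\<in>V. 0 \<le> y u \<and> y u \<le> x u" unfolding y_def using x0 v by auto
    then have "clique_poly V E y > 0" using \<open>c4\<close> unfolding c4_def by blast
    moreover have "clique_poly V E y = 1 - x v" unfolding y_def by (rule cp_single[OF V v])
    ultimately show "x v < 1" by simp
  qed
  have eqf: "(\<forall>v\<in>V. x v < 1) \<Longrightarrow> ftilde_series V E (\<lambda>v. ennreal (x v)) = f_series V E (\<lambda>v. ennreal (x v / (1 - x v)))"
    using x0 by (intro ftilde_eq_f) auto
  have c12: "c1 \<longleftrightarrow> c2"
  proof
    assume c1
    then show c2 unfolding c1_def c2_def using eqf by auto
  next
    assume c2
    then have "\<forall>v\<in>V. x v < 1" using c24 c4lt by blast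
    then show c1 using \<open>c2\<close> eqf unfolding c1_def c2_def by auto
  qed
  show ?thesis using c12 c24 c43 c32 c45 c53 by blast
qed


end
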